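(* Let $K$ be a $p$-adic field and let $f(x)\in K[x_1,\ldots,x_n]$ be a (non-constant) form of degree $d$. Then, as an identity of meromorphic functions of $s\in\mathbb{C}$, \[ \left\langle |f|_K^{s},\Phi\right\rangle=\left(\frac{1-q^{ds}}{1-q^{-n}}\right)Z(s,f)\left\langle \mathcal{R}_{ds+n},\Phi\right\rangle \] for every $\Phi\in\Delta(K^n)$.
   Context: $K$ is a finite extension of $\mathbb{Q}_p$ with valuation ring $R_K$, maximal ideal $P_K$, residue field of cardinality $q$; $|\cdot|_K$ is the normalized absolute value and $\|x\|_K=\max_i|x_i|_K$ for $x\in K^n$. $|dx|$ is the Haar measure on $K^n$ with $\mathrm{vol}(R_K^n)=1$. For $\Phi$ a Schwartz–Bruhat function (locally constant with compact support), $\langle |f|_K^s,\Phi\rangle=\int_{K^n\setminus f^{-1}(0)}\Phi(x)|f(x)|_K^s|dx|$ for $\mathrm{Re}(s)>0$, extended meromorphically to $\mathbb{C}$ (Igusa); $Z(s,f)=\int_{R_K^n}|f(x)|_K^s|dx|$ for $\mathrm{Re}(s)>0$ and its meromorphic continuation. The $p$-adic Gamma function is $\Gamma_n(\alpha)=\frac{1-q^{\alpha-n}}{1-q^{-\alpha}}$. The Riesz kernel $\mathcal{R}_\alpha$ is the distribution given for $\mathrm{Re}(\alpha)>0$, $\alpha\notin n+\frac{2\pi i}{\log q}\mathbb{Z}$, by the function $\|x\|_K^{\alpha-n}/\Gamma_n(\alpha)$, meromorphically continued to $\mathbb{C}$ by $\langle\mathcal{R}_\alpha,\Phi\rangle=\Phi(0)\frac{1-q^{-n}}{1-q^{\alpha-n}}+\frac{1-q^{-\alpha}}{1-q^{\alpha-n}}\int_{\|x\|_K\le1}(\Phi(x)-\Phi(0))\|x\|_K^{\alpha-n}|dx|+\frac{1-q^{-\alpha}}{1-q^{\alpha-n}}\int_{\|x\|_K>1}\Phi(x)\|x\|_K^{\alpha-n}|dx|$.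 For $l\in\mathbb{Z}$, $\Omega_l$ is the characteristic function of the ball $(P_K^l)^n$; $\Delta(K^n)$ is the $\mathbb{C}$-vector space spanned by all $\Omega_l$, $l\in\mathbb{Z}$. *)

theory Defs
  imports "HOL-Analysis.Analysis"
begin

section \<open>The p-adic field K, given by its normalized absolute value\<close>

definition valring :: "('k::field_char_0 \<Rightarrow> real) \<Rightarrow> 'k set" where
  "valring absK = {x. absK x \<le> 1}"

definition maxideal :: "('k::field_char_0 \<Rightarrow> real) \<Rightarrow> 'k set" where
  "maxideal absK = {x. absK x < 1}"

definition residue_card :: "('k::field_char_0 \<Rightarrow> real) \<Rightarrow> nat" where
  "residue_card absK = card (valring absK //
      {(x, y). x \<in> valring absK \<and> y \<in> valring absK \<and> x - y \<in> maxideal absK})"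

text \<open>Topological closure of the prime field Q in K (a copy of Q_p).\<close>
definition rat_closure :: "('k::field_char_0 \<Rightarrow> real) \<Rightarrow> 'k set" where
  "rat_closure absK = {x. \<forall>e>0. \<exists>r::rat. absK (x - of_rat r) < e}"

text \<open>K is a finite extension of Q_p and absK is its normalized absolute value:
  absK is a complete non-archimedean absolute value, p-adic on Q for some prime p,
  K is finite dimensional over the closure of Q (which is Q_p), and the value group
  is q^Z with q the cardinality of the residue field.\<close>
definition p_adic_field :: "('k::field_char_0 \<Rightarrow> real) \<Rightarrow> bool" where
  "p_adic_field absK \<longleftrightarrow>
     (\<forall>x. absK x = 0 \<longleftrightarrow> x = 0) \<and>
     (\<forall>x y. absK (x * y) = absK x * absK y) \<and>
     (\<forall>x y. absK (x + y) \<le> max (absK x) (absK y)) \<and>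
     (\<forall>X::nat \<Rightarrow> 'k. (\<forall>e>0. \<exists>N. \<forall>m\<ge>N. \<forall>k\<ge>N. absK (X m - X k) < e) \<longrightarrow>
          (\<exists>L. \<forall>e>0. \<exists>N. \<forall>m\<ge>N. absK (X m - L) < e)) \<and>
     (\<exists>p::nat. prime p \<and> absK (of_nat p) < 1) \<and>
     (\<exists>B. finite B \<and> (\<forall>x. \<exists>a. (\<forall>b\<in>B. a b \<in> rat_closure absK) \<and> x = (\<Sum>b\<in>B. a b * b))) \<and>
     1 < residue_card absK \<and>
     absK ` (UNIV - {0}) = {real (residue_card absK) powi k | k. True}"

definition normK :: "('k::field_char_0 \<Rightarrow> real) \<Rightarrow> 'k ^ 'n \<Rightarrow> real" where
  "normK absK x = Max (range (\<lambda>i. absK (x $ i)))"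

text \<open>Haar measure on K^n (Borel sets = sigma algebra generated by the balls),
  translation invariant, normalized by vol(R_K^n) = 1.\<close>
definition haar_measure :: "('k::field_char_0 \<Rightarrow> real) \<Rightarrow> ('k ^ 'n) measure \<Rightarrow> bool" where
  "haar_measure absK M \<longleftrightarrow>
     space M = UNIV \<and>
     sets M = sigma_sets UNIV {{x. normK absK (x - a) \<le> r} | a r. True} \<and>
     (\<forall>a. \<forall>A\<in>sets M. emeasure M ((\<lambda>x. a + x) ` A) = emeasure M A) \<and>
     emeasure M {x. normK absK x \<le> 1} = 1"

text \<open>A form of degree d in the variables x_i (i in 'n) with coefficients in K, given by
  its finitely supported coefficient function on exponent vectors; non-constant
  (d >= 1) and nonzero.\<close>
definition hom_form :: "nat \<Rightarrow> (('n::finite \<Rightarrow> nat) \<Rightarrow> 'k::field_char_0) \<Rightarrow> bool" where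
  "hom_form d c \<longleftrightarrow> 1 \<le> d \<and> finite {a. c a \<noteq> 0} \<and> {a. c a \<noteq> 0} \<noteq> {} \<and>
     (\<forall>a. c a \<noteq> 0 \<longrightarrow> (\<Sum>i\<in>UNIV. a i) = d)"

definition form_eval :: "(('n::finite \<Rightarrow> nat) \<Rightarrow> 'k::field_char_0) \<Rightarrow> 'k ^ 'n \<Rightarrow> 'k" where
  "form_eval c x = (\<Sum>a\<in>{a. c a \<noteq> 0}. c a * (\<Prod>i\<in>UNIV. (x $ i) ^ a i))"

definition qpow :: "('k::field_char_0 \<Rightarrow> real) \<Rightarrow> complex \<Rightarrow> complex" where
  "qpow absK z = of_nat (residue_card absK) powr z"

text \<open>Omega_l: characteristic function of (P_K^l)^n = {x. ||x|| \<le> q^-l}.\<close>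
definition Omega :: "('k::field_char_0 \<Rightarrow> real) \<Rightarrow> int \<Rightarrow> 'k ^ 'n \<Rightarrow> complex" where
  "Omega absK l x = (if normK absK x \<le> real (residue_card absK) powi (- l) then 1 else 0)"

definition Delta_space :: "('k::field_char_0 \<Rightarrow> real) \<Rightarrow> ('k ^ 'n \<Rightarrow> complex) set" where
  "Delta_space absK = {\<Phi>. \<exists>L c. finite L \<and> \<Phi> = (\<lambda>x. \<Sum>l\<in>L. c l * Omega absK l x)}"

definition igusa_pairing :: "('k::field_char_0 \<Rightarrow> real) \<Rightarrow> ('k ^ 'n) measure \<Rightarrow>
    ('k ^ 'n \<Rightarrow> 'k) \<Rightarrow> complex \<Rightarrow> ('k ^ 'n \<Rightarrow> complex) \<Rightarrow> complex" where
  "igusa_pairing absK M f s \<Phi> =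
     (LINT x : {x. f x \<noteq> 0} | M. \<Phi> x * complex_of_real (absK (f x)) powr s)"

definition igusa_zeta :: "('k::field_char_0 \<Rightarrow> real) \<Rightarrow> ('k ^ 'n) measure \<Rightarrow>
    ('k ^ 'n \<Rightarrow> 'k) \<Rightarrow> complex \<Rightarrow> complex" where
  "igusa_zeta absK M f s =
     (LINT x : {x. normK absK x \<le> 1} | M. complex_of_real (absK (f x)) powr s)"

text \<open>The Riesz kernel R_alpha paired with Phi, via the explicit formula of the context
  (which is its meromorphic continuation; for Re alpha > 0 it agrees with the integral of
  ||x||^(alpha-n)/Gamma_n(alpha)).\<close>
definition riesz :: "('k::field_char_0 \<Rightarrow> real) \<Rightarrow> ('k ^ 'n::finite) measure \<Rightarrow>
    complex \<Rightarrow> ('k ^ 'n \<Rightarrow> complex) \<Rightarrow> complex" where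
  "riesz absK M \<alpha> \<Phi> =
     (let n = of_nat CARD('n) in
       \<Phi> 0 * (1 - qpow absK (- n)) / (1 - qpow absK (\<alpha> - n))
     + (1 - qpow absK (- \<alpha>)) / (1 - qpow absK (\<alpha> - n)) *
         (LINT x : {x. normK absK x \<le> 1} | M.
             (\<Phi> x - \<Phi> 0) * complex_of_real (normK absK x) powr (\<alpha> - n))
     + (1 - qpow absK (- \<alpha>)) / (1 - qpow absK (\<alpha> - n)) *
         (LINT x : {x. normK absK x > 1} | M.
             \<Phi> x * complex_of_real (normK absK x) powr (\<alpha> - n)))"

end

theory Submission
  imports Defs
begin

locale padic =
  fixes absK :: "'k::field_char_0 \<Rightarrow> real"
  assumes pf: "p_adic_field absK"
begin

abbreviation "q \<equiv> real (residue_card absK)"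

lemma q_gt1: "1 < q" using pf unfolding p_adic_field_def by auto
lemma q_pos: "0 < q" using q_gt1 by auto

lemma abs_zero_iff[simp]: "absK x = 0 \<longleftrightarrow> x = 0" using pf unfolding p_adic_field_def by auto
lemma abs0[simp]: "absK 0 = 0" using abs_zero_iff by simp
lemma abs_mult: "absK (x * y) = absK x * absK y" using pf unfolding p_adic_field_def by auto
lemma abs_ultra: "absK (x + y) \<le> max (absK x) (absK y)" using pf unfolding p_adic_field_def by auto

lemma abs_val: "x \<noteq> 0 \<Longrightarrow> \<exists>k. absK x = q powi k"
proof -
  assume "x \<noteq> 0"
  then have "absK x \<in> absK ` (UNIV - {0})" by auto
  then show ?thesis using pf unfolding p_adic_field_def by auto
qed

lemma abs_surj: "\<exists>x. absK x = q powi k"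
proof -
  have "q powi k \<in> absK ` (UNIV - {0})" using pf unfolding p_adic_field_def by auto
  then show ?thesis by auto
qed

lemma abs_pos: "x \<noteq> 0 \<Longrightarrow> 0 < absK x"
  using abs_val q_pos by (metis zero_less_power_int)

lemma abs_nonneg[simp]: "0 \<le> absK x"
  by (cases "x = 0") (auto dest: abs_pos)

lemma abs_one[simp]: "absK 1 = 1"
proof -
  have "absK 1 = absK 1 * absK 1" using abs_mult[of 1 1] by simp
  moreover have "absK 1 \<noteq> 0" by simp
  ultimately show ?thesis by (metis mult_cancel_right1)
qed

lemma abs_minus[simp]: "absK (- x) = absK x"
proof -
  have "absK (-1) * absK (-1) = 1" using abs_mult[of "-1" "-1"] by simp
  then have "absK (-1) = 1" using abs_nonneg[of "-1"]
    by (metis abs_one abs_mult mult_cancel_right1 mult_minus1_right power2_eq_square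
        real_sqrt_abs real_sqrt_one abs_of_nonneg)
  then show ?thesis using abs_mult[of "-1" x] by simp
qed

lemma abs_diff_sym: "absK (x - y) = absK (y - x)"
  by (metis abs_minus minus_diff_eq)

lemma abs_ultra_diff: "absK (x - y) \<le> max (absK x) (absK y)"
  using abs_ultra[of x "-y"] by simp

lemma abs_inverse: "absK (inverse x) = inverse (absK x)"
proof (cases "x = 0")
  case False
  then have "absK x * absK (inverse x) = 1" using abs_mult[of x "inverse x"] by simp
  then show ?thesis by (metis inverse_unique)
qed simp

lemma abs_divide: "absK (x / y) = absK x / absK y"
  by (simp add: divide_inverse abs_mult abs_inverse)

lemma abs_power: "absK (x ^ k) = absK x ^ k"
  by (induct k) (auto simp: abs_mult)

lemma abs_strict: "absK x < absK y \<Longrightarrow> absK (x + y) = absK y"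
proof -
  assume a: "absK x < absK y"
  have "absK (x + y) \<le> absK y" using abs_ultra[of x y] a by simp
  moreover have "absK y \<le> max (absK (x + y)) (absK x)" using abs_ultra_diff[of "x + y" x] by simp
  ultimately show ?thesis using a by auto
qed

lemma abs_sum_le: "finite S \<Longrightarrow> 0 \<le> C \<Longrightarrow> (\<And>b. b \<in> S \<Longrightarrow> absK (g b) \<le> C) \<Longrightarrow> absK (sum g S) \<le> C"
proof (induct S rule: finite_induct)
  case (insert a F)
  have "absK (g a) \<le> C" using insert(5) by simp
  moreover have "absK (sum g F) \<le> C" using insert by auto
  ultimately show ?case using abs_ultra[of "g a" "sum g F"] insert(1,2) by simp
qed simp

lemma abs_lt1: "absK x < 1 \<Longrightarrow> absK x \<le> inverse q"
proof (cases "x = 0")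
  case False
  assume a: "absK x < 1"
  obtain k where k: "absK x = q powi k" using abs_val False by auto
  have "k < 0"
  proof (rule ccontr)
    assume "\<not> k < 0"
    then have "1 \<le> q powi k" using q_gt1 by (simp add: one_le_power_int)
    then show False using a k by simp
  qed
  then have "k \<le> -1" by simp
  then have "q powi k \<le> q powi (-1)" using q_gt1 by (intro power_int_increasing) auto
  then show ?thesis using k by (simp add: power_int_minus)
qed (simp add: q_pos less_imp_le)

end

context padic begin

lemma normK_ge: "absK (x $ i) \<le> normK absK x"
  unfolding normK_def by (rule Max_ge) auto

lemma normK_le_iff: "normK absK x \<le> C \<longleftrightarrow> (\<forall>i. absK (x $ i) \<le> C)"
  unfolding normK_def by (subst Max_le_iff) auto

lemma normK_attained: "\<exists>i. normK absK x = absK (x $ i)"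
proof -
  have "normK absK x \<in> range (\<lambda>i. absK (x $ i))" unfolding normK_def by (rule Max_in) auto
  then show ?thesis by auto
qed

lemma normK_nonneg[simp]: "0 \<le> normK absK x"
  using normK_ge[of x undefined] abs_nonneg[of "x $ undefined"] by linarith

lemma normK_0[simp]: "normK absK 0 = 0"
  using normK_attained[of 0] by auto

lemma normK_eq0[simp]: "normK absK x = 0 \<longleftrightarrow> x = 0"
proof
  assume "normK absK x = 0"
  then have "\<forall>i. absK (x $ i) \<le> 0" using normK_le_iff[of x 0] by simp
  then show "x = 0" by (metis abs_pos not_le vec_eq_iff zero_index)
qed simp

lemma normK_pos: "x \<noteq> 0 \<Longrightarrow> 0 < normK absK x"
  using normK_eq0 normK_nonneg by (metis less_eq_real_def)

lemma normK_ultra: "normK absK (x + y) \<le> max (normK absK x) (normK absK y)"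
  unfolding normK_le_iff
proof
  fix i
  have "absK ((x + y) $ i) \<le> max (absK (x $ i)) (absK (y $ i))" using abs_ultra by simp
  also have "\<dots> \<le> max (normK absK x) (normK absK y)" using normK_ge[of x i] normK_ge[of y i] by auto
  finally show "absK ((x + y) $ i) \<le> max (normK absK x) (normK absK y)" .
qed

lemma normK_minus[simp]: "normK absK (- x) = normK absK x"
  unfolding normK_def by simp

lemma normK_diff_sym: "normK absK (x - y) = normK absK (y - x)"
  by (metis normK_minus minus_diff_eq)

lemma normK_ultra_diff: "normK absK (x - y) \<le> max (normK absK x) (normK absK y)"
  using normK_ultra[of x "-y"] by simp

lemma normK_tri: "normK absK (x - z) \<le> max (normK absK (x - y)) (normK absK (y - z))"
  using normK_ultra[of "x - y" "y - z"] by simp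

lemma normK_smult: "normK absK (e *s x) = absK e * normK absK x"
proof -
  obtain i where i: "normK absK x = absK (x $ i)" using normK_attained by blast
  obtain j where j: "normK absK (e *s x) = absK ((e *s x) $ j)" using normK_attained by blast
  have "absK e * absK (x $ j) \<le> absK e * normK absK x"
    using normK_ge[of x j] by (simp add: mult_left_mono)
  moreover have "absK e * absK (x $ i) \<le> normK absK (e *s x)"
    using normK_ge[of "e *s x" i] by (simp add: vector_scalar_mult_def abs_mult)
  moreover have "normK absK (e *s x) = absK e * absK (x $ j)" using j by (simp add: vector_scalar_mult_def abs_mult)
  ultimately show ?thesis using i by (simp only: i)
qed

lemma normK_val: "x \<noteq> 0 \<Longrightarrow> \<exists>k. normK absK x = q powi k"
proof -
  assume "x \<noteq> 0"
  then have "normK absK x \<noteq> 0" by simp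
  obtain i where i: "normK absK x = absK (x $ i)" using normK_attained by blast
  then have "x $ i \<noteq> 0" using \<open>normK absK x \<noteq> 0\<close> by auto
  then show ?thesis using abs_val i by auto
qed

lemma normK_strict: "normK absK x < normK absK y \<Longrightarrow> normK absK (x + y) = normK absK y"
proof -
  assume a: "normK absK x < normK absK y"
  have "normK absK (x + y) \<le> normK absK y" using normK_ultra[of x y] a by simp
  moreover have "normK absK y \<le> max (normK absK (x + y)) (normK absK x)"
    using normK_ultra_diff[of "x + y" x] by simp
  ultimately show ?thesis using a by auto
qed

definition kball :: "'k ^ 'n \<Rightarrow> real \<Rightarrow> ('k ^ 'n) set" where
  "kball a r = {x. normK absK (x - a) \<le> r}"

lemma kball_recenter: "normK absK (b - a) \<le> r \<Longrightarrow> kball a r = kball b r"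
  unfolding kball_def
proof (intro set_eqI iffI; simp)
  fix x assume "normK absK (b - a) \<le> r"
  then show "normK absK (x - a) \<le> r \<Longrightarrow> normK absK (x - b) \<le> r"
    using normK_tri[of x b a] normK_diff_sym[of b a] by auto
  show "normK absK (b - a) \<le> r \<Longrightarrow> normK absK (x - b) \<le> r \<Longrightarrow> normK absK (x - a) \<le> r"
    using normK_tri[of x a b] by auto
qed

lemma kball_mono: "r \<le> r' \<Longrightarrow> kball a r \<subseteq> kball a r'"
  unfolding kball_def by auto

lemma kball_Int: "kball a r \<inter> kball b r' = {} \<or> kball a r \<inter> kball b r' = kball a r \<or> kball a r \<inter> kball b r' = kball b r'"
proof (cases "kball a r \<inter> kball b r' = {}")
  case False
  then obtain c where c: "c \<in> kball a r" "c \<in> kball b r'" by auto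
  have "normK absK (c - a) \<le> r" "normK absK (c - b) \<le> r'" using c by (auto simp: kball_def)
  then have e1: "kball a r = kball c r" "kball b r' = kball c r'"
    by (auto intro!: kball_recenter)
  show ?thesis
  proof (cases "r \<le> r'")
    case True then show ?thesis using e1 kball_mono[of r r' c] by auto
  next
    case False then show ?thesis using e1 kball_mono[of r' r c] by auto
  qed
qed simp

lemma kball_translate: "kball a r = (\<lambda>x. a + x) ` kball 0 r"
  unfolding kball_def by (auto simp: image_iff intro!: exI[of _ "x - a" for x])

lemma kball_neg: "r < 0 \<Longrightarrow> kball a r = {}"
  unfolding kball_def by (auto dest: order_trans[OF normK_nonneg])

lemma kball_zero: "kball a 0 = {a}"
  unfolding kball_def by (auto, metis normK_eq0 normK_nonneg antisym eq_iff_diff_eq_0)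

lemma powi_real_mono: "k \<le> l \<Longrightarrow> q powi k \<le> q powi l"
  using q_gt1 by (intro power_int_increasing) auto

lemma powi_real_strict: "k < l \<Longrightarrow> q powi k < q powi l"
  using q_gt1 by (intro power_int_strict_increasing) auto

lemma powi_real_le_iff: "q powi k \<le> q powi l \<longleftrightarrow> k \<le> l"
  using powi_real_mono powi_real_strict by (meson not_le)

lemma exists_level: "0 < r \<Longrightarrow> \<exists>k. q powi k \<le> r \<and> r < q powi (k + 1)"
proof -
  assume r: "0 < r"
  define k where "k = \<lfloor>log q r\<rfloor>"
  have pw: "\<And>m::int. q powi m = q powr (of_int m)"
    using q_pos by (simp add: powr_real_of_int')
  have "q powr (of_int k) \<le> q powr (log q r)" using q_gt1 unfolding k_def by simp
  moreover have "q powr (log q r) < q powr (of_int (k + 1))" using q_gt1 unfolding k_def by simp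
  ultimately show ?thesis using r q_gt1 by (auto simp: pw)
qed

lemma kball_level: "q powi k \<le> r \<Longrightarrow> r < q powi (k + 1) \<Longrightarrow> kball a r = kball a (q powi k)"
proof -
  assume a: "q powi k \<le> r" "r < q powi (k + 1)"
  show ?thesis unfolding kball_def
  proof (intro set_eqI iffI; simp)
    fix x assume b: "normK absK (x - a) \<le> r"
    show "normK absK (x - a) \<le> q powi k"
    proof (cases "x - a = 0")
      case False
      then obtain m where m: "normK absK (x - a) = q powi m" using normK_val by blast
      then have "q powi m < q powi (k + 1)" using a b by simp
      then have "m < k + 1" using powi_real_le_iff by (meson not_le)
      then show ?thesis using m powi_real_mono by simp
    qed (simp add: less_imp_le)
  next
    fix x assume "normK absK (x - a) \<le> q powi k" then show "normK absK (x - a) \<le> r" using a by simp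
  qed
qed

end

context padic begin

lemma reps: "\<exists>T. finite T \<and> card T = residue_card absK \<and> (\<forall>t\<in>T. absK t \<le> 1) \<and>
   (\<forall>x. absK x \<le> 1 \<longrightarrow> (\<exists>t\<in>T. absK (x - t) < 1)) \<and>
   (\<forall>t\<in>T. \<forall>t'\<in>T. absK (t - t') < 1 \<longrightarrow> t = t')"
proof -
  define R where "R = valring absK"
  define rel where "rel = {(x, y). x \<in> R \<and> y \<in> R \<and> x - y \<in> maxideal absK}"
  have rel_iff: "(x, y) \<in> rel \<longleftrightarrow> absK x \<le> 1 \<and> absK y \<le> 1 \<and> absK (x - y) < 1" for x y
    unfolding rel_def R_def valring_def maxideal_def by auto
  have eq: "equiv R rel"
  proof (rule equivI)
    show "rel \<subseteq> R \<times> R" unfolding rel_def by auto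
    show "refl_on R rel" unfolding refl_on_def using rel_iff by (auto simp: R_def valring_def)
    show "sym rel" unfolding sym_def using rel_iff abs_diff_sym by metis
    show "trans rel" unfolding trans_def
    proof (intro allI impI)
      fix x y z assume a: "(x, y) \<in> rel" "(y, z) \<in> rel"
      have "absK (x - z) \<le> max (absK (x - y)) (absK (y - z))" using abs_ultra[of "x - y" "y - z"] by simp
      then show "(x, z) \<in> rel" using a rel_iff by auto
    qed
  qed
  define Q where "Q = R // rel"
  have cQ: "card Q = residue_card absK" unfolding Q_def R_def rel_def residue_card_def by simp
  then have finQ: "finite Q" using q_gt1 card.infinite by fastforce
  have ne: "X \<in> Q \<Longrightarrow> X \<noteq> {}" for X unfolding Q_def using eq in_quotient_imp_non_empty by blast
  define f where "f X = (SOME x. x \<in> X)" for X :: "'k set"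
  have fX: "X \<in> Q \<Longrightarrow> f X \<in> X" for X unfolding f_def using ne by (metis ex_in_conv someI_ex)
  have fcl: "X \<in> Q \<Longrightarrow> X = rel `` {f X}" for X
  proof -
    assume X: "X \<in> Q"
    then obtain a where a: "X = rel `` {a}" "a \<in> R" unfolding Q_def by (auto elim: quotientE)
    then have "(a, f X) \<in> rel" using fX[OF X] by auto
    then show ?thesis using a eq equiv_class_eq by metis
  qed
  have inj: "inj_on f Q"
  proof (rule inj_onI)
    fix X Y assume "X \<in> Q" "Y \<in> Q" "f X = f Y"
    then show "X = Y" using fcl by metis
  qed
  define T where "T = f ` Q"
  have "finite T" unfolding T_def using finQ by simp
  moreover have "card T = residue_card absK" unfolding T_def using card_image[OF inj] cQ by simp
  moreover have "\<forall>t\<in>T. absK t \<le> 1"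
  proof
    fix t assume "t \<in> T"
    then obtain X where "X \<in> Q" "t = f X" unfolding T_def by auto
    then have "t \<in> R" using fX eq unfolding Q_def by (meson in_quotient_imp_subset subsetD)
    then show "absK t \<le> 1" unfolding R_def valring_def by simp
  qed
  moreover have "\<forall>x. absK x \<le> 1 \<longrightarrow> (\<exists>t\<in>T. absK (x - t) < 1)"
  proof (intro allI impI)
    fix x assume x: "absK x \<le> 1"
    then have xR: "x \<in> R" unfolding R_def valring_def by simp
    define X where "X = rel `` {x}"
    have XQ: "X \<in> Q" unfolding X_def Q_def using xR by (rule quotientI)
    then have "(x, f X) \<in> rel" using fX unfolding X_def by auto
    then show "\<exists>t\<in>T. absK (x - t) < 1" using XQ rel_iff unfolding T_def by auto
  qed
  moreover have "\<forall>t\<in>T. \<forall>t'\<in>T. absK (t - t') < 1 \<longrightarrow> t = t'"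
  proof (intro ballI impI)
    fix t t' assume tt: "t \<in> T" "t' \<in> T" "absK (t - t') < 1"
    then obtain X Y where XY: "X \<in> Q" "Y \<in> Q" "t = f X" "t' = f Y" unfolding T_def by auto
    then have "t \<in> R" "t' \<in> R" using fX eq unfolding Q_def by (meson in_quotient_imp_subset subsetD)+
    then have "(t, t') \<in> rel" using tt unfolding rel_iff R_def valring_def by simp
    then have "rel `` {t} = rel `` {t'}" using eq equiv_class_eq by metis
    then have "X = Y" using fcl XY by metis
    then show "t = t'" using XY by simp
  qed
  ultimately show ?thesis by blast
qed

end

context padic begin

lemma kball_iff: "x \<in> kball a r \<longleftrightarrow> (\<forall>i. absK (x $ i - a $ i) \<le> r)"
  unfolding kball_def by (simp add: normK_le_iff)

lemma card_Tn: "finite T \<Longrightarrow> finite {v :: 'k ^ 'n. \<forall>i. v $ i \<in> T} \<and> card {v :: 'k ^ 'n. \<forall>i. v $ i \<in> T} = card T ^ CARD('n)"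
proof -
  assume fT: "finite T"
  let ?Tn = "{v :: 'k ^ 'n. \<forall>i. v $ i \<in> T}"
  have bij: "bij_betw vec_nth ?Tn (PiE UNIV (\<lambda>_. T))"
    unfolding bij_betw_def
  proof
    show "inj_on vec_nth ?Tn" by (simp add: inj_on_def vec_nth_inject)
    show "vec_nth ` ?Tn = PiE UNIV (\<lambda>_. T)"
    proof (intro set_eqI iffI)
      fix f :: "'n \<Rightarrow> 'k" assume "f \<in> PiE UNIV (\<lambda>_. T)"
      then have "f = vec_nth (vec_lambda f)" "vec_lambda f \<in> ?Tn" by (auto simp: PiE_iff)
      then show "f \<in> vec_nth ` ?Tn" by blast
    qed (auto simp: PiE_iff)
  qed
  have "finite (PiE UNIV (\<lambda>_. T) :: ('n \<Rightarrow> 'k) set)" using fT by (simp add: finite_PiE)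
  then have "finite ?Tn" using bij bij_betw_finite by blast
  moreover have "card ?Tn = card T ^ CARD('n)"
    using bij_betw_same_card[OF bij] by (simp add: card_PiE)
  ultimately show ?thesis by simp
qed

lemma decomp:
  fixes e :: 'k
  assumes e: "e \<noteq> 0"
  obtains Tn :: "('k ^ 'n) set" where "finite Tn" "card Tn = residue_card absK ^ CARD('n)"
    "kball 0 (inverse (absK e)) = (\<Union>v\<in>Tn. kball (inverse e *s v) (inverse (absK e) / q))"
    "disjoint_family_on (\<lambda>v. kball (inverse e *s v) (inverse (absK e) / q)) Tn"
proof -
  obtain T where T0: "finite T \<and> card T = residue_card absK \<and> (\<forall>t\<in>T. absK t \<le> 1) \<and>
    (\<forall>x. absK x \<le> 1 \<longrightarrow> (\<exists>t\<in>T. absK (x - t) < 1)) \<and>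
    (\<forall>t\<in>T. \<forall>t'\<in>T. absK (t - t') < 1 \<longrightarrow> t = t')" using reps by (elim exE) assumption
  note T = T0[THEN conjunct1] T0[THEN conjunct2, THEN conjunct1] T0[THEN conjunct2, THEN conjunct2, THEN conjunct1]
     T0[THEN conjunct2, THEN conjunct2, THEN conjunct2, THEN conjunct1] T0[THEN conjunct2, THEN conjunct2, THEN conjunct2, THEN conjunct2]
  define Tn where "Tn = {v :: 'k ^ 'n. \<forall>i. v $ i \<in> T}"
  define \<rho> where "\<rho> = inverse (absK e)"
  have rho: "0 < \<rho>" unfolding \<rho>_def using e abs_pos by simp
  have ae: "absK e * \<rho> = 1" unfolding \<rho>_def using e by simp
  have comp: "absK (x - inverse e * t) = \<rho> * absK (e * x - t)" for x t
  proof -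
    have "x - inverse e * t = inverse e * (e * x - t)" using e by (simp add: algebra_simps)
    then show ?thesis by (simp add: abs_mult abs_inverse \<rho>_def)
  qed
  have "kball 0 \<rho> = (\<Union>v\<in>Tn. kball (inverse e *s v) (\<rho> / q))"
  proof (intro set_eqI iffI)
    fix x :: "'k ^ 'n" assume "x \<in> kball 0 \<rho>"
    then have xi: "absK (x $ i) \<le> \<rho>" for i unfolding kball_iff by simp
    have "absK (e * x $ i) \<le> 1" for i
    proof -
      have "absK (e * x $ i) = absK e * absK (x $ i)" by (simp add: abs_mult)
      also have "\<dots> \<le> absK e * \<rho>" using xi[of i] by (simp add: mult_left_mono)
      finally show ?thesis using ae by simp
    qed
    then have "\<forall>i. \<exists>t\<in>T. absK (e * x $ i - t) < 1" using T(4) by blast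
    then obtain t :: "'n \<Rightarrow> 'k" where t: "\<And>i. t i \<in> T" "\<And>i. absK (e * x $ i - t i) < 1" by metis
    define v :: "'k ^ 'n" where "v = (\<chi> i. t i)"
    have "v \<in> Tn" unfolding Tn_def v_def using t by simp
    moreover have "x \<in> kball (inverse e *s v) (\<rho> / q)"
      unfolding kball_iff
    proof
      fix i
      have "absK (x $ i - (inverse e *s v) $ i) = \<rho> * absK (e * x $ i - t i)"
        using comp by (simp add: v_def vector_scalar_mult_def)
      also have "\<dots> \<le> \<rho> * inverse q" using abs_lt1[OF t(2)[of i]] rho by (simp add: mult_left_mono)
      finally show "absK (x $ i - (inverse e *s v) $ i) \<le> \<rho> / q" by (simp add: divide_inverse)
    qed
    ultimately show "x \<in> (\<Union>v\<in>Tn. kball (inverse e *s v) (\<rho> / q))" by blast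
  next
    fix x :: "'k ^ 'n" assume "x \<in> (\<Union>v\<in>Tn. kball (inverse e *s v) (\<rho> / q))"
    then obtain v where v: "v \<in> Tn" "x \<in> kball (inverse e *s v) (\<rho> / q)" by blast
    show "x \<in> kball 0 \<rho>" unfolding kball_iff
    proof
      fix i
      have a1: "absK (x $ i - inverse e * v $ i) \<le> \<rho> / q" using v(2) unfolding kball_iff
        by (simp add: vector_scalar_mult_def)
      have "\<rho> / q \<le> \<rho>" using rho q_gt1 by (simp add: divide_le_eq)
      have a2: "absK (inverse e * v $ i) \<le> \<rho>" using T(3) v(1) rho unfolding Tn_def
        by (auto simp: abs_mult abs_inverse \<rho>_def intro: mult_left_le)
      have "absK (x $ i) \<le> max (absK (x $ i - inverse e * v $ i)) (absK (inverse e * v $ i))"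
        using abs_ultra[of "x $ i - inverse e * v $ i" "inverse e * v $ i"] by simp
      then show "absK (x $ i - 0 $ i) \<le> \<rho>" using a1 a2 \<open>\<rho> / q \<le> \<rho>\<close> by simp
    qed
  qed
  moreover have "disjoint_family_on (\<lambda>v. kball (inverse e *s v) (\<rho> / q)) Tn"
    unfolding disjoint_family_on_def
  proof (intro ballI impI)
    fix v w :: "'k ^ 'n" assume vw: "v \<in> Tn" "w \<in> Tn" "v \<noteq> w"
    show "kball (inverse e *s v) (\<rho> / q) \<inter> kball (inverse e *s w) (\<rho> / q) = {}"
    proof (rule ccontr)
      assume "kball (inverse e *s v) (\<rho> / q) \<inter> kball (inverse e *s w) (\<rho> / q) \<noteq> {}"
      then obtain x where x: "x \<in> kball (inverse e *s v) (\<rho> / q)" "x \<in> kball (inverse e *s w) (\<rho> / q)" by blast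
      have "v $ i = w $ i" for i
      proof -
        have b1: "absK (x $ i - inverse e * v $ i) \<le> \<rho> / q" "absK (x $ i - inverse e * w $ i) \<le> \<rho> / q"
          using x unfolding kball_iff by (auto simp: vector_scalar_mult_def)
        have "absK (inverse e * v $ i - x $ i) \<le> \<rho> / q" using b1(1) abs_diff_sym[of "inverse e * v $ i" "x $ i"] by simp
        then have "absK (inverse e * v $ i - inverse e * w $ i) \<le> \<rho> / q"
          using abs_ultra[of "inverse e * v $ i - x $ i" "x $ i - inverse e * w $ i"] b1(2)
          by simp
        moreover have "absK (inverse e * v $ i - inverse e * w $ i) = \<rho> * absK (v $ i - w $ i)"
          by (simp add: abs_mult abs_inverse \<rho>_def right_diff_distrib[symmetric])
        ultimately have "\<rho> * absK (v $ i - w $ i) \<le> \<rho> * inverse q" by (simp add: divide_inverse)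
        then have "absK (v $ i - w $ i) \<le> inverse q" using rho by simp
        also have "\<dots> < 1" using q_gt1 by (simp add: inverse_less_1_iff)
        finally show ?thesis using T(5) vw unfolding Tn_def by blast
      qed
      then show False using vw(3) by (simp add: vec_eq_iff)
    qed
  qed
  moreover have "finite Tn" "card Tn = residue_card absK ^ CARD('n)" using card_Tn[OF T(1)] T(2) unfolding Tn_def by auto
  ultimately show ?thesis using that unfolding \<rho>_def by blast
qed

end

locale padic_haar = padic absK for absK :: "'k::field_char_0 \<Rightarrow> real" +
  fixes M :: "('k ^ 'n::finite) measure"
  assumes haar: "haar_measure absK M"
begin


lemma space_M[simp]: "space M = UNIV" using haar unfolding haar_measure_def by simp

lemma sets_M: "sets M = sigma_sets UNIV {kball a r | a r. True}"
  using haar unfolding haar_measure_def kball_def by simp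

lemma kball_in[measurable]: "kball a r \<in> sets M"
  unfolding sets_M by (rule sigma_sets.Basic) blast

lemma trans_inv: "A \<in> sets M \<Longrightarrow> emeasure M ((\<lambda>x. a + x) ` A) = emeasure M A"
  using haar unfolding haar_measure_def by blast

lemma meas_unit: "emeasure M (kball 0 1) = 1"
  using haar unfolding haar_measure_def kball_def by simp

lemma meas_center: "emeasure M (kball a r) = emeasure M (kball 0 r)"
  using kball_translate[of a r] trans_inv[OF kball_in[of 0 r]] by simp

lemma meas_step:
  assumes e: "e \<noteq> 0"
  shows "emeasure M (kball 0 (inverse (absK e))) = ennreal (q ^ CARD('n)) * emeasure M (kball 0 (inverse (absK e) / q))"
proof -
  obtain Tn :: "('k ^ 'n) set" where T: "finite Tn" "card Tn = residue_card absK ^ CARD('n)"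
    "kball 0 (inverse (absK e)) = (\<Union>v\<in>Tn. kball (inverse e *s v) (inverse (absK e) / q))"
    "disjoint_family_on (\<lambda>v. kball (inverse e *s v) (inverse (absK e) / q)) Tn"
    using decomp[OF e] by blast
  have "emeasure M (kball 0 (inverse (absK e))) = (\<Sum>v\<in>Tn. emeasure M (kball (inverse e *s v) (inverse (absK e) / q)))"
    unfolding T(3) by (rule sum_emeasure[symmetric]) (use T in auto)
  also have "\<dots> = (\<Sum>v\<in>Tn. emeasure M (kball 0 (inverse (absK e) / q)))"
    by (rule sum.cong) (rule refl, rule meas_center)
  also have "\<dots> = of_nat (card Tn) * emeasure M (kball 0 (inverse (absK e) / q))" by simp
  also have "of_nat (card Tn) = ennreal (q ^ CARD('n))" using T(2) by (simp add: ennreal_of_nat_eq_real_of_nat)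
  finally show ?thesis .
qed

lemma meas_level: "emeasure M (kball 0 (q powi j)) = ennreal ((q ^ CARD('n)) powi j)"
proof -
  have step: "emeasure M (kball 0 (q powi j)) = ennreal (q ^ CARD('n)) * emeasure M (kball 0 (q powi (j - 1)))" for j
  proof -
    obtain e where e: "absK e = q powi (- j)" using abs_surj by blast
    then have "e \<noteq> 0" using q_pos by (metis abs0 zero_less_power_int less_irrefl)
    moreover have "inverse (absK e) = q powi j" using e by (simp add: power_int_minus)
    moreover have "q powi j / q = q powi (j - 1)" using q_pos by (simp add: power_int_diff)
    ultimately show ?thesis using meas_step[of e] by simp
  qed
  have qN: "0 < q ^ CARD('n)" using q_pos by simp
  show ?thesis
  proof (induct j rule: int_induct[where k = 0])
    case base
    then show ?case using meas_unit by simp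
  next
    case (step1 i)
    have "emeasure M (kball 0 (q powi (i + 1))) = ennreal (q ^ CARD('n)) * ennreal ((q ^ CARD('n)) powi i)"
      using step[of "i + 1"] step1 by simp
    also have "\<dots> = ennreal ((q ^ CARD('n)) powi (i + 1))"
      using qN by (simp add: ennreal_mult[symmetric] power_int_add)
    finally show ?case .
  next
    case (step2 i)
    have h: "ennreal ((q ^ CARD('n)) powi i) = ennreal (q ^ CARD('n)) * emeasure M (kball 0 (q powi (i - 1)))"
      using step[of i] step2 by simp
    show ?case
    proof (cases "emeasure M (kball 0 (q powi (i - 1)))")
      case (real r)
      then have "ennreal ((q ^ CARD('n)) powi i) = ennreal (q ^ CARD('n) * r)" using h qN by (simp add: ennreal_mult)
      then have "(q ^ CARD('n)) powi i = q ^ CARD('n) * r" using qN real by (subst (asm) ennreal_inj) auto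
      then have "r = (q ^ CARD('n)) powi (i - 1)" using qN by (simp add: power_int_diff field_simps)
      then show ?thesis using real by simp
    next
      case top
      then show ?thesis using h qN by (simp add: ennreal_mult_top)
    qed
  qed
qed

end

context padic_haar begin

lemma meas_ball_pos:
  assumes "q powi k \<le> r" "r < q powi (k + 1)"
  shows "emeasure M (kball a r) = ennreal ((q ^ CARD('n)) powi k)"
  using kball_level[OF assms, of a] meas_center[of a] meas_level by simp

lemma meas_kball_fin: "emeasure M (kball a r) < \<infinity>"
proof (cases "0 < r")
  case True
  then obtain k where "q powi k \<le> r" "r < q powi (k + 1)" using exists_level by blast
  then show ?thesis using meas_ball_pos by simp
next
  case False
  then have "kball a r \<subseteq> kball a 1" using kball_mono[of r 1] by simp
  then have "emeasure M (kball a r) \<le> emeasure M (kball a 1)" by (intro emeasure_mono) auto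
  also have "\<dots> = 1" using meas_center[of a 1] meas_unit by simp
  finally show ?thesis by (simp add: order_le_less_trans)
qed

lemma meas_singleton: "emeasure M {a} = 0"
proof -
  define c where "c = inverse (q ^ CARD('n))"
  have c: "0 < c" "c < 1" unfolding c_def using q_gt1 by (auto simp: inverse_less_1_iff one_less_power)
  have le: "emeasure M {a} \<le> ennreal (c ^ j)" for j :: nat
  proof -
    have "{a} \<subseteq> kball a (q powi (- int j))" unfolding kball_def by simp
    then have "emeasure M {a} \<le> emeasure M (kball a (q powi (- int j)))" by (intro emeasure_mono) auto
    also have "\<dots> = ennreal ((q ^ CARD('n)) powi (- int j))" using meas_center[of a] meas_level by simp
    also have "(q ^ CARD('n)) powi (- int j) = c ^ j" unfolding c_def by (simp add: power_int_minus power_inverse)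
    finally show ?thesis .
  qed
  have fin: "emeasure M {a} < \<infinity>" using le[of 0] by (simp add: order_le_less_trans)
  then obtain x where x: "emeasure M {a} = ennreal x" "0 \<le> x" by (cases "emeasure M {a}") auto
  have "x \<le> c ^ j" for j
  proof -
    have "ennreal x \<le> ennreal (c ^ j)" using le[of j] x(1) by simp
    then show ?thesis using c by (subst (asm) ennreal_le_iff) auto
  qed
  note h = this
  have "x = 0"
  proof -
    show "x = 0"
    proof (rule ccontr)
      assume "x \<noteq> 0"
      then have "0 < x" using x(2) by linarith
      then obtain j where "c ^ j < x" using real_arch_pow_inv[OF _ c(2)] by blast
      then show False using h[of j] by linarith
    qed
  qed
  then show ?thesis using x by simp
qed

lemma kball_empty_eq: "{} = kball (0::'k^'n) (-1)" by (rule sym, rule kball_neg) simp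

lemma gen_Int_stable: "Int_stable {kball (a::'k^'n) r | a r. True}"
  unfolding Int_stable_def
proof (intro ballI)
  fix A B assume "A \<in> {kball (a::'k^'n) r | a r. True}" "B \<in> {kball (a::'k^'n) r | a r. True}"
  then obtain a r b r' where AB: "A = kball a r" "B = kball b r'" by blast
  obtain c s where cs: "A \<inter> B = kball c s"
  proof -
    consider (e) "kball a r \<inter> kball b r' = {}" | (l) "kball a r \<inter> kball b r' = kball a r"
      | (r) "kball a r \<inter> kball b r' = kball b r'" using kball_Int[of a r b r'] by blast
    then show ?thesis
    proof cases
      case e then show ?thesis using that[of 0 "-1"] unfolding AB by (simp only: kball_empty_eq)
    next
      case l then show ?thesis using that[of a r] unfolding AB by simp
    next
      case r then show ?thesis using that[of b r'] unfolding AB by simp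
    qed
  qed
  show "A \<inter> B \<in> {kball (a::'k^'n) r | a r. True}" unfolding cs by blast
qed

lemma smult_sub: fixes e :: 'k and y b :: "'k ^ 'n" shows "e \<noteq> 0 \<Longrightarrow> e *s y - b = e *s (y - inverse e *s b)"
proof -
  assume e: "e \<noteq> 0"
  have "e * (u - inverse e * v) = e * u - v" for u v
  proof -
    have "e * (u - inverse e * v) = e * u - (e * inverse e) * v" by (simp add: right_diff_distrib mult.assoc)
    also have "e * inverse e = 1" using e by simp
    finally show ?thesis by simp
  qed
  then show ?thesis by (simp add: vec_eq_iff vector_scalar_mult_def)
qed

lemma preimage_kball:
  fixes e :: 'k and b :: "'k ^ 'n"
  assumes e: "e \<noteq> 0"
  shows "(\<lambda>y. e *s y) -` kball b r = kball (inverse e *s b) (r / absK e)"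
proof -
  have "normK absK (e *s y - b) \<le> r \<longleftrightarrow> normK absK (y - inverse e *s b) \<le> r / absK e" for y
  proof -
    have "normK absK (e *s y - b) = absK e * normK absK (y - inverse e *s b)"
      unfolding smult_sub[OF e, of y b] by (rule normK_smult)
    then show ?thesis by (subst pos_le_divide_eq[OF abs_pos[OF e]]) (simp add: mult.commute)
  qed
  then show ?thesis unfolding kball_def by auto
qed

lemma scale_meas[measurable]: fixes e :: 'k shows "e \<noteq> 0 \<Longrightarrow> (\<lambda>y. e *s y) \<in> measurable M M"
  by (rule measurable_sigma_sets[OF sets_M]) (auto simp: preimage_kball)

lemma scale_distr:
  fixes e :: 'k
  assumes e: "e \<noteq> 0"
  shows "distr M M (\<lambda>y. e *s y) = density M (\<lambda>_. ennreal (inverse (absK e) ^ CARD('n)))"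
proof (rule measure_eqI_generator_eq[OF gen_Int_stable, where \<Omega> = UNIV and A = "\<lambda>i. kball 0 (q powi int i)"])
  show "{kball (a::'k^'n) r | a r. True} \<subseteq> Pow UNIV" by simp
  show "sets (distr M M (\<lambda>y. e *s y)) = sigma_sets UNIV {kball a r |a r. True}" using sets_M by simp
  show "sets (density M (\<lambda>_. ennreal (inverse (absK e) ^ CARD('n)))) = sigma_sets UNIV {kball a r |a r. True}"
    using sets_M by simp
  show "range (\<lambda>i. kball (0::'k^'n) (q powi int i)) \<subseteq> {kball a r |a r. True}" by blast
  show "(\<Union>i. kball (0::'k^'n) (q powi int i)) = UNIV"
  proof (intro set_eqI iffI)
    fix x :: "'k ^ 'n"
    show "x \<in> (\<Union>i. kball 0 (q powi int i))"
    proof (cases "x = 0")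
      case True then show ?thesis unfolding kball_def by auto
    next
      case False
      then obtain k where k: "normK absK x = q powi k" using normK_val by blast
      have "q powi k \<le> q powi int (nat k)" using powi_real_mono by simp
      then have "x \<in> kball 0 (q powi int (nat k))" unfolding kball_def using k by simp
      then show ?thesis by blast
    qed
  qed simp
  show "emeasure (distr M M (\<lambda>y. e *s y)) (kball 0 (q powi int i)) \<noteq> \<infinity>" for i
    using meas_kball_fin e by (simp add: emeasure_distr preimage_kball less_top[symmetric])
  fix X assume "X \<in> {kball (a::'k^'n) r | a r. True}"
  then obtain b r where X: "X = kball b r" by blast
  have ae: "0 < absK e" using abs_pos e by simp
  obtain m where m: "absK e = q powi m" using abs_val e by blast
  have lhs: "emeasure (distr M M (\<lambda>y. e *s y)) X = emeasure M (kball (inverse e *s b) (r / absK e))"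
    unfolding X using e by (simp add: emeasure_distr preimage_kball)
  have rhs: "emeasure (density M (\<lambda>_. ennreal (inverse (absK e) ^ CARD('n)))) X =
      ennreal (inverse (absK e) ^ CARD('n)) * emeasure M (kball b r)"
    unfolding X by (rule emeasure_density_const) simp
  show "emeasure (distr M M (\<lambda>y. e *s y)) X = emeasure (density M (\<lambda>_. ennreal (inverse (absK e) ^ CARD('n)))) X"
    unfolding lhs rhs
  proof (cases "0 < r")
    case True
    then obtain k where k: "q powi k \<le> r" "r < q powi (k + 1)" using exists_level by blast
    have qm: "0 < q powi m" using q_pos by simp
    have d1: "q powi (k - m) = q powi k / q powi m" using q_pos by (simp add: power_int_diff)
    have d2: "q powi (k - m + 1) = q powi (k + 1) / q powi m" using q_pos
      by (metis diff_add_eq power_int_diff less_irrefl)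
    have "q powi (k - m) \<le> r / absK e" unfolding d1 m using k(1) qm by (simp add: divide_right_mono)
    moreover have "r / absK e < q powi (k - m + 1)" unfolding d2 m using k(2) qm by (simp add: divide_strict_right_mono)
    ultimately have "q powi (k - m) \<le> r / absK e" "r / absK e < q powi (k - m + 1)" by auto
    then have "emeasure M (kball (inverse e *s b) (r / absK e)) = ennreal ((q ^ CARD('n)) powi (k - m))"
      by (rule meas_ball_pos)
    also have "\<dots> = ennreal (inverse (absK e) ^ CARD('n)) * ennreal ((q ^ CARD('n)) powi k)"
    proof -
      have "(q ^ CARD('n)) powi (k - m) = inverse (absK e) ^ CARD('n) * (q ^ CARD('n)) powi k"
      proof -
        have p: "(q ^ CARD('n)) powi m = (q powi m) ^ CARD('n)" by (simp add: power_int_power power_int_power' mult.commute)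
        have "(q ^ CARD('n)) powi (k - m) = (q ^ CARD('n)) powi k / (q ^ CARD('n)) powi m"
          using q_pos by (simp add: power_int_diff)
        also have "\<dots> = inverse (q powi m) ^ CARD('n) * (q ^ CARD('n)) powi k"
          unfolding p by (simp add: power_inverse divide_inverse mult.commute)
        finally show ?thesis unfolding m .
      qed
      then show ?thesis using ae by (simp add: ennreal_mult)
    qed
    finally show "emeasure M (kball (inverse e *s b) (r / absK e)) =
        ennreal (inverse (absK e) ^ CARD('n)) * emeasure M (kball b r)" using meas_ball_pos[OF k] by simp
  next
    case False
    show "emeasure M (kball (inverse e *s b) (r / absK e)) =
        ennreal (inverse (absK e) ^ CARD('n)) * emeasure M (kball b r)"
    proof (cases "r = 0")
      case True
      then show ?thesis by (simp add: kball_zero meas_singleton)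
    next
      case False
      then have "r < 0" using \<open>\<not> 0 < r\<close> by simp
      then have "r / absK e < 0" using ae by (simp add: divide_neg_pos)
      then show ?thesis using \<open>r < 0\<close> by (simp add: kball_neg)
    qed
  qed
qed

lemma scale_integral:
  fixes g :: "'k ^ 'n \<Rightarrow> complex"
  assumes e: "e \<noteq> 0" and g[measurable]: "g \<in> borel_measurable M"
  shows "integral\<^sup>L M (\<lambda>y. g (e *s y)) = (inverse (absK e) ^ CARD('n)) *\<^sub>R integral\<^sup>L M g"
proof -
  have "integral\<^sup>L M (\<lambda>y. g (e *s y)) = integral\<^sup>L (distr M M (\<lambda>y. e *s y)) g"
    using e by (simp add: integral_distr)
  also have "\<dots> = integral\<^sup>L (density M (\<lambda>_. ennreal (inverse (absK e) ^ CARD('n)))) g"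
    using scale_distr[OF e] by simp
  also have "\<dots> = integral\<^sup>L M (\<lambda>x. (inverse (absK e) ^ CARD('n)) *\<^sub>R g x)"
    by (rule integral_density) auto
  also have "\<dots> = (inverse (absK e) ^ CARD('n)) *\<^sub>R integral\<^sup>L M g" by simp
  finally show ?thesis .
qed

end

context padic begin

lemma dense_K: "\<exists>D. countable D \<and> (\<forall>x. \<forall>\<epsilon>>0. \<exists>d\<in>D. absK (x - d) < \<epsilon>)"
proof -
  obtain B where B: "finite B" "\<forall>x. \<exists>a. (\<forall>b\<in>B. a b \<in> rat_closure absK) \<and> x = (\<Sum>b\<in>B. a b * b)"
    using pf unfolding p_adic_field_def by blast
  define D where "D = (\<lambda>r. \<Sum>b\<in>B. of_rat (r b) * b) ` (PiE B (\<lambda>_. UNIV))"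
  have "countable D" unfolding D_def using B(1) by (intro countable_image countable_PiE) auto
  moreover have "\<exists>d\<in>D. absK (x - d) < \<epsilon>" if eps: "\<epsilon> > 0" for x \<epsilon>
  proof -
    obtain a where a: "\<forall>b\<in>B. a b \<in> rat_closure absK" "x = (\<Sum>b\<in>B. a b * b)" using B(2) by blast
    define C where "C = (\<Sum>b\<in>B. absK b) + 1"
    have C: "0 < C" unfolding C_def by (simp add: sum_nonneg add_nonneg_pos)
    have Cb: "b \<in> B \<Longrightarrow> absK b \<le> C" for b unfolding C_def
      using member_le_sum[of b B absK] B(1) by simp
    define \<eta> where "\<eta> = \<epsilon> / (2 * C)"
    have eta: "0 < \<eta>" unfolding \<eta>_def using eps C by simp
    have "\<forall>b\<in>B. \<exists>r. absK (a b - of_rat r) < \<eta>" using a(1) eta unfolding rat_closure_def by blast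
    then obtain rr where rr: "\<And>b. b \<in> B \<Longrightarrow> absK (a b - of_rat (rr b)) < \<eta>" by metis
    define d where "d = (\<Sum>b\<in>B. of_rat (rr b) * b)"
    have "restrict rr B \<in> PiE B (\<lambda>_. UNIV)" by simp
    moreover have "d = (\<Sum>b\<in>B. of_rat (restrict rr B b) * b)" unfolding d_def by simp
    ultimately have "d \<in> D" unfolding D_def by blast
    have "x - d = (\<Sum>b\<in>B. (a b - of_rat (rr b)) * b)"
      unfolding a(2) d_def by (simp add: sum_subtractf left_diff_distrib)
    also have "absK \<dots> \<le> \<epsilon> / 2"
    proof (rule abs_sum_le[OF B(1)])
      show "0 \<le> \<epsilon> / 2" using eps by simp
      fix b assume b: "b \<in> B"
      have "absK ((a b - of_rat (rr b)) * b) = absK (a b - of_rat (rr b)) * absK b" by (simp add: abs_mult)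
      also have "\<dots> \<le> \<eta> * C" using rr[OF b] Cb[OF b] eta by (intro mult_mono) auto
      also have "\<eta> * C = \<epsilon> / 2" unfolding \<eta>_def using C by simp
      finally show "absK ((a b - of_rat (rr b)) * b) \<le> \<epsilon> / 2" .
    qed
    finally show ?thesis using \<open>d \<in> D\<close> eps by (intro bexI[of _ d]) auto
  qed
  ultimately show ?thesis by blast
qed

lemma dense_Kn: "\<exists>Dn :: ('k ^ 'n) set. countable Dn \<and> (\<forall>x. \<forall>\<epsilon>>0. \<exists>d\<in>Dn. normK absK (x - d) < \<epsilon>)"
proof -
  obtain D where D: "countable D" "\<forall>x. \<forall>\<epsilon>>0. \<exists>d\<in>D. absK (x - d) < \<epsilon>" using dense_K by blast
  define Dn :: "('k ^ 'n) set" where "Dn = vec_lambda ` (PiE UNIV (\<lambda>_. D))"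
  have "countable Dn" unfolding Dn_def using D(1) by (intro countable_image countable_PiE) auto
  moreover have "\<exists>d\<in>Dn. normK absK (x - d) < \<epsilon>" if eps: "\<epsilon> > 0" for x :: "'k ^ 'n" and \<epsilon>
  proof -
    have "\<forall>i. \<exists>d\<in>D. absK (x $ i - d) < \<epsilon>" using D(2) eps by blast
    then obtain dd :: "'n \<Rightarrow> 'k" where dd: "\<And>i. dd i \<in> D" "\<And>i. absK (x $ i - dd i) < \<epsilon>" by metis
    have "vec_lambda dd \<in> Dn" unfolding Dn_def using dd(1) by (intro imageI) (auto simp: PiE_iff)
    moreover obtain i where "normK absK (x - vec_lambda dd) = absK ((x - vec_lambda dd) $ i)"
      using normK_attained by blast
    then have "normK absK (x - vec_lambda dd) < \<epsilon>" using dd(2)[of i] by simp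
    ultimately show ?thesis by blast
  qed
  ultimately show ?thesis by blast
qed

lemma abs_prod: "absK (prod v S) = prod (\<lambda>i. absK (v i)) S"
  by (induct S rule: infinite_finite_induct) (auto simp: abs_mult)

lemma prod_diff_bound:
  assumes "finite S" "1 \<le> B" "0 \<le> \<Delta>"
    and "\<And>i. i \<in> S \<Longrightarrow> absK (u i) \<le> B \<and> absK (v i) \<le> B \<and> absK (u i - v i) \<le> \<Delta>"
  shows "absK (prod u S - prod v S) \<le> \<Delta> * B ^ card S"
  using assms
proof (induct S rule: finite_induct)
  case (insert i S)
  have IH: "absK (prod u S - prod v S) \<le> \<Delta> * B ^ card S" using insert by auto
  have hi: "absK (u i) \<le> B" "absK (v i) \<le> B" "absK (u i - v i) \<le> \<Delta>" using insert by auto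
  have pv: "absK (prod v S) \<le> B ^ card S"
    unfolding abs_prod using insert by (intro prod_le_power) auto
  have eq: "prod u (insert i S) - prod v (insert i S) = u i * (prod u S - prod v S) + (u i - v i) * prod v S"
    using insert(1,2) by (simp add: algebra_simps)
  have t1: "absK (u i * (prod u S - prod v S)) \<le> \<Delta> * B ^ card (insert i S)"
  proof -
    have "absK (u i * (prod u S - prod v S)) \<le> B * (\<Delta> * B ^ card S)"
      unfolding abs_mult using hi IH insert(4,5) by (intro mult_mono) auto
    then show ?thesis using insert(1,2) by (simp add: algebra_simps)
  qed
  have t2: "absK ((u i - v i) * prod v S) \<le> \<Delta> * B ^ card (insert i S)"
  proof -
    have "absK ((u i - v i) * prod v S) \<le> \<Delta> * B ^ card S"
      unfolding abs_mult using hi pv insert(5) by (intro mult_mono) auto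
    also have "\<dots> \<le> \<Delta> * B ^ card (insert i S)" using insert(1,2,4,5)
      by (intro mult_left_mono power_increasing) auto
    finally show ?thesis .
  qed
  show ?case unfolding eq using abs_ultra[of "u i * (prod u S - prod v S)" "(u i - v i) * prod v S"] t1 t2 by simp
qed simp

lemma pow_diff_bound:
  assumes "1 \<le> B" "0 \<le> \<delta>" "absK u \<le> B" "absK v \<le> B" "absK (u - v) \<le> \<delta>"
  shows "absK (u ^ k - v ^ k) \<le> \<delta> * B ^ k"
  using prod_diff_bound[of "{..<k}" B \<delta> "\<lambda>_. u" "\<lambda>_. v"] assms by simp

lemma form_lip:
  fixes c :: "('n::finite \<Rightarrow> nat) \<Rightarrow> 'k"
  assumes fin: "finite {a. c a \<noteq> 0}" and B: "1 \<le> B"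
  shows "\<exists>Cst\<ge>0. \<forall>x y. normK absK x \<le> B \<longrightarrow> normK absK y \<le> B \<longrightarrow>
            absK (form_eval c y - form_eval c x) \<le> normK absK (y - x) * Cst"
proof -
  define S where "S = {a. c a \<noteq> 0}"
  define bnd where "bnd a = absK (c a) * (B ^ sum a UNIV * (B ^ sum a UNIV) ^ CARD('n))" for a :: "'n \<Rightarrow> nat"
  define Cst where "Cst = (\<Sum>a\<in>S. bnd a)"
  have bnd0: "0 \<le> bnd a" for a unfolding bnd_def using B by simp
  have "0 \<le> Cst" unfolding Cst_def using bnd0 by (simp add: sum_nonneg)
  moreover have "absK (form_eval c y - form_eval c x) \<le> normK absK (y - x) * Cst"
    if x: "normK absK x \<le> B" and y: "normK absK y \<le> B" for x y :: "'k ^ 'n"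
  proof -
    define \<delta> where "\<delta> = normK absK (y - x)"
    have d0: "0 \<le> \<delta>" unfolding \<delta>_def by simp
    have mon: "absK ((\<Prod>i\<in>UNIV. (y $ i) ^ a i) - (\<Prod>i\<in>UNIV. (x $ i) ^ a i)) \<le> \<delta> * (B ^ sum a UNIV * (B ^ sum a UNIV) ^ CARD('n))" for a
    proof -
      have "absK ((\<Prod>i\<in>UNIV. (y $ i) ^ a i) - (\<Prod>i\<in>UNIV. (x $ i) ^ a i)) \<le> (\<delta> * B ^ sum a UNIV) * (B ^ sum a UNIV) ^ card (UNIV :: 'n set)"
      proof (rule prod_diff_bound)
        show "1 \<le> B ^ sum a UNIV" using B by simp
        show "0 \<le> \<delta> * B ^ sum a UNIV" using d0 B by simp
        fix i :: 'n
        have ai: "a i \<le> sum a UNIV" by (rule member_le_sum) auto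
        have yi: "absK (y $ i) \<le> B" "absK (x $ i) \<le> B" "absK (y $ i - x $ i) \<le> \<delta>"
          using normK_ge[of y i] normK_ge[of x i] normK_ge[of "y - x" i] x y unfolding \<delta>_def by auto
        have pw: "B ^ a i \<le> B ^ sum a UNIV" using B ai by (intro power_increasing) auto
        have "absK ((y $ i) ^ a i) \<le> B ^ sum a UNIV"
          unfolding abs_power using yi pw by (meson abs_nonneg order_trans power_mono)
        moreover have "absK ((x $ i) ^ a i) \<le> B ^ sum a UNIV"
          unfolding abs_power using yi pw by (meson abs_nonneg order_trans power_mono)
        moreover have "absK ((y $ i) ^ a i - (x $ i) ^ a i) \<le> \<delta> * B ^ sum a UNIV"
        proof -
          have "absK ((y $ i) ^ a i - (x $ i) ^ a i) \<le> \<delta> * B ^ a i"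
            using pow_diff_bound[OF B d0 yi] .
          also have "\<dots> \<le> \<delta> * B ^ sum a UNIV" using pw d0 by (simp add: mult_left_mono)
          finally show ?thesis .
        qed
        ultimately show "absK ((y $ i) ^ a i) \<le> B ^ sum a UNIV \<and> absK ((x $ i) ^ a i) \<le> B ^ sum a UNIV \<and>
            absK ((y $ i) ^ a i - (x $ i) ^ a i) \<le> \<delta> * B ^ sum a UNIV" by blast
      qed simp
      then show ?thesis by (simp add: mult.assoc)
    qed
    have "form_eval c y - form_eval c x = (\<Sum>a\<in>S. c a * ((\<Prod>i\<in>UNIV. (y $ i) ^ a i) - (\<Prod>i\<in>UNIV. (x $ i) ^ a i)))"
      unfolding form_eval_def S_def by (simp add: sum_subtractf right_diff_distrib)
    also have "absK \<dots> \<le> \<delta> * Cst"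
    proof (rule abs_sum_le)
      show "finite S" using fin unfolding S_def .
      show "0 \<le> \<delta> * Cst" using d0 \<open>0 \<le> Cst\<close> by simp
      fix a assume a: "a \<in> S"
      have "absK (c a * ((\<Prod>i\<in>UNIV. (y $ i) ^ a i) - (\<Prod>i\<in>UNIV. (x $ i) ^ a i))) \<le> absK (c a) * (\<delta> * (B ^ sum a UNIV * (B ^ sum a UNIV) ^ CARD('n)))"
        unfolding abs_mult using mon[of a] by (intro mult_left_mono) auto
      also have "\<dots> = \<delta> * bnd a" unfolding bnd_def by (simp add: algebra_simps)
      also have "\<dots> \<le> \<delta> * Cst" unfolding Cst_def using d0 a fin bnd0 unfolding S_def
        by (intro mult_left_mono member_le_sum) auto
      finally show "absK (c a * ((\<Prod>i\<in>UNIV. (y $ i) ^ a i) - (\<Prod>i\<in>UNIV. (x $ i) ^ a i))) \<le> \<delta> * Cst" .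
    qed
    finally show ?thesis unfolding \<delta>_def by (simp add: mult.commute)
  qed
  ultimately show ?thesis by blast
qed

end

context padic_haar begin

lemma kopen_sets:
  assumes U: "\<And>x. x \<in> U \<Longrightarrow> \<exists>j. kball x (q powi j) \<subseteq> U"
  shows "U \<in> sets M"
proof -
  obtain Dn :: "('k ^ 'n) set" where Dn: "countable Dn" "\<forall>x. \<forall>\<epsilon>>0. \<exists>d\<in>Dn. normK absK (x - d) < \<epsilon>"
    using dense_Kn by blast
  define F where "F = {kball d (q powi j) | d j. d \<in> Dn \<and> kball d (q powi j) \<subseteq> U}"
  have "F \<subseteq> (\<lambda>(d, j). kball d (q powi j)) ` (Dn \<times> (UNIV :: int set))" unfolding F_def by auto
  moreover have "countable ((\<lambda>(d, j). kball d (q powi j)) ` (Dn \<times> (UNIV :: int set)))"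
    using Dn(1) by (intro countable_image countable_SIGMA) auto
  ultimately have cF: "countable F" by (rule countable_subset)
  have FU: "U = \<Union>F"
  proof (intro set_eqI iffI)
    fix x assume x: "x \<in> U"
    then obtain j where j: "kball x (q powi j) \<subseteq> U" using U by blast
    obtain d where d: "d \<in> Dn" "normK absK (x - d) < q powi j" using Dn(2) q_pos by (meson zero_less_power_int)
    have "kball d (q powi j) = kball x (q powi j)"
      by (rule kball_recenter) (use d(2) normK_diff_sym in auto)
    then have "kball d (q powi j) \<in> F" "x \<in> kball d (q powi j)" unfolding F_def using j d(1) q_pos
      by (auto simp: kball_def less_imp_le)
    then show "x \<in> \<Union>F" by blast
  qed (auto simp: F_def)
  have "F \<subseteq> sets M" unfolding F_def by auto
  then show ?thesis unfolding FU using cF by (intro sets.countable_Union) auto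
qed

lemma locconst_count:
  fixes g :: "'k ^ 'n \<Rightarrow> real"
  assumes vals: "\<And>x. g x = 0 \<or> (\<exists>k. g x = q powi k)"
    and lc: "\<And>x. g x \<noteq> 0 \<Longrightarrow> \<exists>j. \<forall>y\<in>kball x (q powi j). g y = g x"
  shows "g \<in> measurable M (count_space (insert 0 (range (\<lambda>k::int. q powi k))))"
proof -
  define A where "A = insert 0 (range (\<lambda>k::int. q powi k))"
  have cA: "countable A" unfolding A_def by simp
  have nz: "{x. g x \<noteq> 0} \<in> sets M"
  proof (rule kopen_sets)
    fix x assume "x \<in> {x. g x \<noteq> 0}"
    then obtain j where "\<forall>y\<in>kball x (q powi j). g y = g x" using lc by blast
    then have "kball x (q powi j) \<subseteq> {x. g x \<noteq> 0}" using \<open>x \<in> _\<close> by auto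
    then show "\<exists>j. kball x (q powi j) \<subseteq> {x. g x \<noteq> 0}" by blast
  qed
  show "g \<in> measurable M (count_space (insert 0 (range (\<lambda>k::int. q powi k))))"
    unfolding A_def[symmetric] measurable_count_space_eq_countable[OF cA]
  proof
    show "g \<in> space M \<rightarrow> A" using vals unfolding A_def by auto
    show "\<forall>a\<in>A. g -` {a} \<inter> space M \<in> sets M"
    proof
      fix a assume "a \<in> A"
      show "g -` {a} \<inter> space M \<in> sets M"
      proof (cases "a = 0")
        case True
        have "g -` {a} \<inter> space M = UNIV - {x. g x \<noteq> 0}" using True by auto
        then show ?thesis using nz by (metis sets.compl_sets space_M)
      next
        case False
        show ?thesis
        proof -
          have "{x. g x = a} \<in> sets M"
          proof (rule kopen_sets)
            fix x assume x: "x \<in> {x. g x = a}"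
            then have "g x \<noteq> 0" using False by simp
            then obtain j where "\<forall>y\<in>kball x (q powi j). g y = g x" using lc by blast
            then have "kball x (q powi j) \<subseteq> {x. g x = a}" using x by auto
            then show "\<exists>j. kball x (q powi j) \<subseteq> {x. g x = a}" by blast
          qed
          moreover have "g -` {a} \<inter> space M = {x. g x = a}" by auto
          ultimately show ?thesis by simp
        qed
      qed
    qed
  qed
qed

lemma count_comp:
  fixes g :: "'k ^ 'n \<Rightarrow> real" and h :: "real \<Rightarrow> 'b::topological_space"
  assumes "g \<in> measurable M (count_space A)"
  shows "(\<lambda>x. h (g x)) \<in> borel_measurable M"
proof -
  have "h \<in> measurable (count_space A) borel" by simp
  then have "h \<circ> g \<in> borel_measurable M" using assms by (intro measurable_comp) auto
  then show ?thesis by (simp add: comp_def)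
qed

lemma normK_count: "(\<lambda>x. normK absK x) \<in> measurable M (count_space (insert 0 (range (\<lambda>k::int. q powi k))))"
proof (rule locconst_count)
  fix x :: "'k ^ 'n"
  show "normK absK x = 0 \<or> (\<exists>k. normK absK x = q powi k)" using normK_val by (cases "x = 0") auto
  assume "normK absK x \<noteq> 0"
  then have "x \<noteq> 0" by simp
  then obtain k where k: "normK absK x = q powi k" using normK_val by blast
  have "\<forall>y\<in>kball x (q powi (k - 1)). normK absK y = normK absK x"
  proof
    fix y assume "y \<in> kball x (q powi (k - 1))"
    then have "normK absK (y - x) < normK absK x" unfolding kball_def k using powi_real_strict[of "k - 1" k] by simp
    then have "normK absK ((y - x) + x) = normK absK x" by (rule normK_strict)
    then show "normK absK y = normK absK x" by simp
  qed
  then show "\<exists>j. \<forall>y\<in>kball x (q powi j). normK absK y = normK absK x" by blast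
qed

lemma form_count:
  fixes c :: "('n \<Rightarrow> nat) \<Rightarrow> 'k"
  assumes fin: "finite {a. c a \<noteq> 0}"
  shows "(\<lambda>x. absK (form_eval c x)) \<in> measurable M (count_space (insert 0 (range (\<lambda>k::int. q powi k))))"
proof (rule locconst_count)
  fix x :: "'k ^ 'n"
  show "absK (form_eval c x) = 0 \<or> (\<exists>k. absK (form_eval c x) = q powi k)"
    using abs_val by (cases "form_eval c x = 0") auto
  assume nz: "absK (form_eval c x) \<noteq> 0"
  define B where "B = max 1 (normK absK x)"
  have B: "1 \<le> B" unfolding B_def by simp
  obtain Cst where Cst: "0 \<le> Cst" "\<forall>x y. normK absK x \<le> B \<longrightarrow> normK absK y \<le> B \<longrightarrow>
            absK (form_eval c y - form_eval c x) \<le> normK absK (y - x) * Cst"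
    using form_lip[OF fin B] by blast
  have fx: "0 < absK (form_eval c x)" using nz abs_nonneg[of "form_eval c x"] by linarith
  have "\<exists>n::nat. (inverse q) ^ n < absK (form_eval c x) / (Cst + 1)"
    using q_gt1 fx Cst(1) by (intro real_arch_pow_inv) (auto simp: inverse_less_1_iff)
  then obtain n :: nat where n: "(inverse q) ^ n < absK (form_eval c x) / (Cst + 1)" by blast
  define j where "j = - int n"
  have qj: "q powi j = (inverse q) ^ n" unfolding j_def by (simp add: power_int_minus power_inverse)
  have qj1: "q powi j \<le> 1" unfolding qj using q_gt1 by (simp add: power_le_one inverse_le_1_iff)
  have "\<forall>y\<in>kball x (q powi j). absK (form_eval c y) = absK (form_eval c x)"
  proof
    fix y assume y: "y \<in> kball x (q powi j)"
    then have dy: "normK absK (y - x) \<le> q powi j" unfolding kball_def by simp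
    have "normK absK y \<le> B"
    proof -
      have "normK absK y \<le> max (normK absK (y - x)) (normK absK x)"
        using normK_ultra[of "y - x" x] by simp
      then show ?thesis using dy qj1 unfolding B_def by auto
    qed
    moreover have "normK absK x \<le> B" unfolding B_def by simp
    ultimately have "absK (form_eval c y - form_eval c x) \<le> normK absK (y - x) * Cst" using Cst(2) by blast
    also have "\<dots> \<le> q powi j * Cst" using dy Cst(1) by (simp add: mult_right_mono)
    also have "\<dots> \<le> q powi j * (Cst + 1)" using q_pos by simp
    also have "\<dots> < absK (form_eval c x)" using n Cst(1) unfolding qj by (simp add: pos_less_divide_eq)
    finally have "absK (form_eval c y - form_eval c x) < absK (form_eval c x)" .
    then have "absK ((form_eval c y - form_eval c x) + form_eval c x) = absK (form_eval c x)" by (rule abs_strict)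
    then show "absK (form_eval c y) = absK (form_eval c x)" by simp
  qed
  then show "\<exists>j. \<forall>y\<in>kball x (q powi j). absK (form_eval c y) = absK (form_eval c x)" by blast
qed

lemma normK_comp_meas[measurable]: "(\<lambda>x. h (normK absK x)) \<in> borel_measurable M"
  by (rule count_comp[OF normK_count])

lemma form_comp_meas:
  "finite {a. c a \<noteq> 0} \<Longrightarrow> (\<lambda>x. h (absK (form_eval c x))) \<in> borel_measurable M"
  by (rule count_comp[OF form_count])

end

lemma cpow_pos: "0 < r \<Longrightarrow> complex_of_real r powr z = exp (z * complex_of_real (ln r))"
  by (simp add: powr_def Ln_of_real)

lemma cpow_zero[simp]: "complex_of_real 0 powr z = 0"
  by (simp add: powr_def)

lemma norm_cpow: "0 \<le> r \<Longrightarrow> norm (complex_of_real r powr z) = r powr Re z"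
proof (cases "r = 0")
  case False
  assume "0 \<le> r"
  then have "0 < r" using False by simp
  then show ?thesis by (simp add: cpow_pos norm_exp_eq_Re powr_def)
qed simp

lemma cpow_mult: "0 < a \<Longrightarrow> 0 \<le> r \<Longrightarrow>
   complex_of_real (a * r) powr z = complex_of_real a powr z * complex_of_real r powr z"
proof (cases "r = 0")
  case False
  assume a: "0 < a" "0 \<le> r"
  then have "0 < r" using False by simp
  have ar: "0 < a * r" using a \<open>0 < r\<close> by simp
  have "complex_of_real (a * r) powr z = exp (z * of_real (ln (a * r)))" by (rule cpow_pos[OF ar])
  also have "ln (a * r) = ln a + ln r" using a \<open>0 < r\<close> by (simp add: ln_mult)
  also have "exp (z * of_real (ln a + ln r)) = exp (z * of_real (ln a)) * exp (z * of_real (ln r))"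
    by (simp add: distrib_left exp_add)
  also have "\<dots> = complex_of_real a powr z * complex_of_real r powr z"
    using cpow_pos[OF a(1)] cpow_pos[OF \<open>0 < r\<close>] by simp
  finally show ?thesis .
qed simp

lemma cpow_bound: "0 \<le> r \<Longrightarrow> r \<le> R \<Longrightarrow> 0 \<le> Re z \<Longrightarrow> norm (complex_of_real r powr z) \<le> R powr Re z"
  by (simp add: norm_cpow powr_mono2)

context padic begin

abbreviation "Lq \<equiv> ln q"

lemma qpow_exp: "qpow absK z = exp (z * complex_of_real Lq)"
proof -
  have "(of_nat (residue_card absK) :: complex) = complex_of_real q" by simp
  then show ?thesis unfolding qpow_def using q_pos by (simp only: cpow_pos)
qed

lemma cpow_qpowi: "complex_of_real (q powi k) powr z = exp (z * of_int k * complex_of_real Lq)"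
proof -
  have "q powi k = q powr of_int k" using q_pos by (simp add: powr_real_of_int')
  then have "ln (q powi k) = of_int k * Lq" by simp
  moreover have "0 < q powi k" using q_pos by simp
  ultimately show ?thesis by (simp only: cpow_pos) (simp add: mult.assoc)
qed

lemma form_hom:
  assumes "hom_form d c"
  shows "form_eval c (e *s y) = e ^ d * form_eval c y"
proof -
  have "(\<Prod>i\<in>UNIV. ((e *s y) $ i) ^ a i) = e ^ d * (\<Prod>i\<in>UNIV. (y $ i) ^ a i)" if "c a \<noteq> 0" for a
  proof -
    have sa: "(\<Sum>i\<in>UNIV. a i) = d" using assms that unfolding hom_form_def by blast
    have "(\<Prod>i\<in>UNIV. ((e *s y) $ i) ^ a i) = (\<Prod>i\<in>UNIV. e ^ a i * (y $ i) ^ a i)"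
      by (simp add: vector_scalar_mult_def power_mult_distrib)
    also have "\<dots> = (\<Prod>i\<in>UNIV. e ^ a i) * (\<Prod>i\<in>UNIV. (y $ i) ^ a i)" by (rule prod.distrib)
    also have "(\<Prod>i\<in>UNIV. e ^ a i) = e ^ d" using sa power_sum[of e a UNIV] by simp
    finally show ?thesis .
  qed
  then show ?thesis unfolding form_eval_def by (simp add: sum_distrib_left algebra_simps)
qed

end

context padic_haar begin

lemma integrable_supp:
  fixes g :: "'k ^ 'n \<Rightarrow> complex"
  assumes g[measurable]: "g \<in> borel_measurable M"
    and supp: "\<And>x. R < normK absK x \<Longrightarrow> g x = 0"
    and bnd: "\<And>x. normK absK x \<le> R \<Longrightarrow> norm (g x) \<le> Bd"
  shows "integrable M g"
proof (rule integrableI_bounded_set[where A = "kball 0 R" and B = Bd])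
  show "kball 0 R \<in> sets M" by simp
  show "emeasure M (kball 0 R) < \<infinity>" by (rule meas_kball_fin)
  show "AE x in M. x \<in> kball 0 R \<longrightarrow> norm (g x) \<le> Bd" using bnd by (auto simp: kball_def)
  show "AE x in M. x \<notin> kball 0 R \<longrightarrow> g x = 0" using supp by (auto simp: kball_def)
qed fact

end

context padic begin

lemma cq_powi: "complex_of_real (q powi k) = exp (of_int k * complex_of_real Lq)"
proof -
  have "q powi k = exp (of_int k * Lq)" using q_pos
    by (simp add: powr_real_of_int'[symmetric] powr_def)
  then show ?thesis by (simp add: exp_of_real[symmetric])
qed

lemma normK_one: "q powi (-1) < normK absK x \<Longrightarrow> normK absK x \<le> 1 \<Longrightarrow> normK absK x = 1"
proof -
  assume a: "q powi (-1) < normK absK x" "normK absK x \<le> 1"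
  have "0 < q powi (-1)" using q_pos by simp
  then have "x \<noteq> 0" using a(1) by auto
  then obtain k where k: "normK absK x = q powi k" using normK_val by blast
  have "-1 < k" using a(1) k powi_real_le_iff by (metis not_le)
  moreover have "k \<le> 0" using a(2) k powi_real_le_iff[of k 0] by simp
  ultimately have "k = 0" by simp
  then show ?thesis using k by simp
qed

lemma Omega_0pt[simp]: "Omega absK l 0 = 1"
  unfolding Omega_def using q_pos by simp

lemma Omega_scale:
  assumes e: "absK e = q powi (- l)"
  shows "Omega absK l (e *s y) = Omega absK 0 y"
proof -
  have "normK absK (e *s y) \<le> q powi (- l) \<longleftrightarrow> normK absK y \<le> 1"
    unfolding normK_smult e using q_pos by (simp add: mult_le_cancel_left1)
  then show ?thesis unfolding Omega_def by simp
qed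

lemma form_bounded:
  fixes c :: "('n::finite \<Rightarrow> nat) \<Rightarrow> 'k"
  assumes fin: "finite {a. c a \<noteq> 0}"
  shows "\<exists>Cf\<ge>0. \<forall>y::'k^'n. normK absK y \<le> R \<longrightarrow> absK (form_eval c y) \<le> Cf"
proof -
  define B where "B = max 1 R"
  have B: "1 \<le> B" unfolding B_def by simp
  obtain Cst where Cst: "0 \<le> Cst" "\<forall>x y. normK absK x \<le> B \<longrightarrow> normK absK y \<le> B \<longrightarrow>
            absK (form_eval c y - form_eval c x) \<le> normK absK (y - x) * Cst"
    using form_lip[OF fin B] by blast
  have "absK (form_eval c y) \<le> absK (form_eval c 0) + B * Cst" if y: "normK absK y \<le> R" for y :: "'k ^ 'n"
  proof -
    have yB: "normK absK y \<le> B" using y unfolding B_def by simp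
    have "absK (form_eval c y - form_eval c 0) \<le> normK absK y * Cst"
      using Cst(2)[rule_format, of 0 y] yB B by simp
    also have "\<dots> \<le> B * Cst" using yB Cst(1) by (simp add: mult_right_mono)
    finally have d: "absK (form_eval c y - form_eval c 0) \<le> B * Cst" .
    have "absK (form_eval c y) \<le> max (absK (form_eval c y - form_eval c 0)) (absK (form_eval c 0))"
      using abs_ultra[of "form_eval c y - form_eval c 0" "form_eval c 0"] by simp
    moreover have "0 \<le> B * Cst" using B Cst(1) by simp
    moreover have m1: "absK (form_eval c y - form_eval c 0) \<le> absK (form_eval c 0) + B * Cst"
      using d abs_nonneg[of "form_eval c 0"] by linarith
    ultimately show ?thesis using max.boundedI[OF m1, of "absK (form_eval c 0)"] by linarith
  qed
  moreover have "0 \<le> absK (form_eval c 0) + B * Cst" using B Cst(1) by simp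
  ultimately show ?thesis by blast
qed

end

context padic_haar begin

lemma Omega_meas[measurable]: "(\<lambda>x. Omega absK l x) \<in> borel_measurable M"
  unfolding Omega_def by (rule normK_comp_meas)

lemma Omega_supp: "q powi (- l) < normK absK x \<Longrightarrow> Omega absK l x = 0"
  unfolding Omega_def by simp

lemma Omega_norm: "norm (Omega absK l x) \<le> 1"
  unfolding Omega_def by simp

lemma int_Omega: "integral\<^sup>L M (Omega absK l) = complex_of_real ((q ^ CARD('n)) powi (- l))"
proof -
  have eq: "Omega absK l = (\<lambda>x. complex_of_real (indicator (kball 0 (q powi (- l))) x))"
    unfolding Omega_def kball_def by (auto simp: indicator_def)
  have "measure M (kball 0 (q powi (- l))) = (q ^ CARD('n)) powi (- l)"
    using meas_level[of "- l"] q_pos by (simp add: measure_def)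
  then show ?thesis unfolding eq by simp
qed

lemma scale_Omega:
  fixes h :: "'k ^ 'n \<Rightarrow> complex"
  assumes h[measurable]: "h \<in> borel_measurable M" and e: "absK e = q powi (- l)"
  shows "integral\<^sup>L M (\<lambda>x. Omega absK l x * h x) =
         complex_of_real ((q powi (- l)) ^ CARD('n)) * integral\<^sup>L M (\<lambda>y. Omega absK 0 y * h (e *s y))"
proof -
  have e0: "e \<noteq> 0" using e q_pos by (metis abs0 less_irrefl zero_less_power_int)
  have "integral\<^sup>L M (\<lambda>y. Omega absK 0 y * h (e *s y)) = integral\<^sup>L M (\<lambda>y. (\<lambda>x. Omega absK l x * h x) (e *s y))"
    by (simp add: Omega_scale[OF e])
  also have "\<dots> = (inverse (absK e) ^ CARD('n)) *\<^sub>R integral\<^sup>L M (\<lambda>x. Omega absK l x * h x)"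
    by (rule scale_integral[OF e0]) simp
  finally have "integral\<^sup>L M (\<lambda>y. Omega absK 0 y * h (e *s y)) = (inverse (absK e) ^ CARD('n)) *\<^sub>R integral\<^sup>L M (\<lambda>x. Omega absK l x * h x)" .
  then show ?thesis using e q_pos by (simp add: scaleR_conv_of_real power_inverse field_simps)
qed

end

context padic_haar begin

lemma F_meas[measurable]: "finite {a. c a \<noteq> 0} \<Longrightarrow>
  (\<lambda>x. complex_of_real (absK (form_eval c x)) powr s) \<in> borel_measurable M"
  by (rule form_comp_meas)

lemma P_meas[measurable]: "(\<lambda>x. complex_of_real (normK absK x) powr z) \<in> borel_measurable M"
  by (rule normK_comp_meas)

lemma integrable_OF:
  assumes fin: "finite {a. c a \<noteq> 0}" and s: "0 \<le> Re s"
  shows "integrable M (\<lambda>x. Omega absK l x * complex_of_real (absK (form_eval c x)) powr s)"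
proof -
  obtain Cf where Cf: "0 \<le> Cf" "\<forall>y::'k^'n. normK absK y \<le> q powi (- l) \<longrightarrow> absK (form_eval c y) \<le> Cf"
    using form_bounded[OF fin] by blast
  show ?thesis
  proof (rule integrable_supp[where R = "q powi (- l)" and Bd = "Cf powr Re s"])
    show "(\<lambda>x. Omega absK l x * complex_of_real (absK (form_eval c x)) powr s) \<in> borel_measurable M"
      using fin by measurable
    fix x :: "'k ^ 'n"
    show "q powi (- l) < normK absK x \<Longrightarrow> Omega absK l x * complex_of_real (absK (form_eval c x)) powr s = 0"
      by (simp add: Omega_supp)
    assume x: "normK absK x \<le> q powi (- l)"
    have "norm (Omega absK l x * complex_of_real (absK (form_eval c x)) powr s) \<le> 1 * Cf powr Re s"
      unfolding norm_mult using Omega_norm Cf x s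
      by (intro mult_mono cpow_bound) auto
    then show "norm (Omega absK l x * complex_of_real (absK (form_eval c x)) powr s) \<le> Cf powr Re s" by simp
  qed
qed

lemma integrable_OP:
  assumes z: "0 \<le> Re z"
  shows "integrable M (\<lambda>x. Omega absK l x * complex_of_real (normK absK x) powr z)"
proof (rule integrable_supp[where R = "q powi (- l)" and Bd = "(q powi (- l)) powr Re z"])
  show "(\<lambda>x. Omega absK l x * complex_of_real (normK absK x) powr z) \<in> borel_measurable M" by measurable
  fix x :: "'k ^ 'n"
  show "q powi (- l) < normK absK x \<Longrightarrow> Omega absK l x * complex_of_real (normK absK x) powr z = 0"
    by (simp add: Omega_supp)
  assume x: "normK absK x \<le> q powi (- l)"
  have "norm (Omega absK l x * complex_of_real (normK absK x) powr z) \<le> 1 * (q powi (- l)) powr Re z"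
    unfolding norm_mult using Omega_norm x z by (intro mult_mono cpow_bound) auto
  then show "norm (Omega absK l x * complex_of_real (normK absK x) powr z) \<le> (q powi (- l)) powr Re z" by simp
qed

lemma integrable_O: "integrable M (Omega absK l)"
proof (rule integrable_supp[where R = "q powi (- l)" and Bd = 1])
  show "Omega absK l \<in> borel_measurable M" using Omega_meas by simp
qed (auto simp: Omega_supp Omega_norm)

lemma LHS_l:
  assumes hom: "hom_form d c"
  shows "integral\<^sup>L M (\<lambda>x. Omega absK l x * complex_of_real (absK (form_eval c x)) powr s) =
    exp (- of_int l * (of_nat d * s + of_nat CARD('n)) * complex_of_real Lq) *
    integral\<^sup>L M (\<lambda>x. Omega absK 0 x * complex_of_real (absK (form_eval c x)) powr s)"
proof -
  have fin: "finite {a. c a \<noteq> 0}" using hom unfolding hom_form_def by blast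
  obtain e where e: "absK e = q powi (- l)" using abs_surj by blast
  have Fe: "complex_of_real (absK (form_eval c (e *s y))) powr s =
      exp (s * of_int (- l * int d) * complex_of_real Lq) * complex_of_real (absK (form_eval c y)) powr s" for y
  proof -
    have h: "absK (form_eval c (e *s y)) = q powi (- l * int d) * absK (form_eval c y)"
      unfolding form_hom[OF hom] abs_mult abs_power e by (simp add: power_int_power')
    have "complex_of_real (q powi (- l * int d) * absK (form_eval c y)) powr s =
        complex_of_real (q powi (- l * int d)) powr s * complex_of_real (absK (form_eval c y)) powr s"
      by (rule cpow_mult[OF zero_less_power_int[OF q_pos]]) simp
    then show ?thesis unfolding h cpow_qpowi .
  qed
  have "integral\<^sup>L M (\<lambda>x. Omega absK l x * complex_of_real (absK (form_eval c x)) powr s) =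
      complex_of_real ((q powi (- l)) ^ CARD('n)) * integral\<^sup>L M (\<lambda>y. Omega absK 0 y * complex_of_real (absK (form_eval c (e *s y))) powr s)"
    by (rule scale_Omega[OF _ e]) (use fin in measurable)
  also have "\<dots> = exp (of_int (- l * int CARD('n)) * complex_of_real Lq) *
      (exp (s * of_int (- l * int d) * complex_of_real Lq) * integral\<^sup>L M (\<lambda>y. Omega absK 0 y * complex_of_real (absK (form_eval c y)) powr s))"
  proof -
    have a: "complex_of_real ((q powi (- l)) ^ CARD('n)) = exp (of_int (- l * int CARD('n)) * complex_of_real Lq)"
      unfolding power_int_power' by (rule cq_powi)
    have b: "(\<lambda>y. Omega absK 0 y * (exp (s * of_int (- l * int d) * complex_of_real Lq) * complex_of_real (absK (form_eval c y)) powr s))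
       = (\<lambda>y. exp (s * of_int (- l * int d) * complex_of_real Lq) * (Omega absK 0 y * complex_of_real (absK (form_eval c y)) powr s))"
      by (rule ext) (rule mult.left_commute)
    show ?thesis unfolding Fe a b by simp
  qed
  also have "\<dots> = exp (of_int (- l * int CARD('n)) * complex_of_real Lq + s * of_int (- l * int d) * complex_of_real Lq) *
    integral\<^sup>L M (\<lambda>x. Omega absK 0 x * complex_of_real (absK (form_eval c x)) powr s)"
    by (simp only: exp_add mult.assoc)
  also have "of_int (- l * int CARD('n)) * complex_of_real Lq + s * of_int (- l * int d) * complex_of_real Lq
     = - of_int l * (of_nat d * s + of_nat CARD('n)) * complex_of_real Lq"
    by (simp add: algebra_simps)
  finally show ?thesis .
qed

lemma J_scale:
  "integral\<^sup>L M (\<lambda>x. Omega absK l x * complex_of_real (normK absK x) powr z) =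
    exp (- of_int l * (z + of_nat CARD('n)) * complex_of_real Lq) *
    integral\<^sup>L M (\<lambda>x. Omega absK 0 x * complex_of_real (normK absK x) powr z)"
proof -
  obtain e where e: "absK e = q powi (- l)" using abs_surj by blast
  have Pe: "complex_of_real (normK absK (e *s y)) powr z =
      exp (z * of_int (- l) * complex_of_real Lq) * complex_of_real (normK absK y) powr z" for y
  proof -
    have h: "normK absK (e *s y) = q powi (- l) * normK absK y" unfolding normK_smult e ..
    have "complex_of_real (q powi (- l) * normK absK y) powr z =
        complex_of_real (q powi (- l)) powr z * complex_of_real (normK absK y) powr z"
      by (rule cpow_mult[OF zero_less_power_int[OF q_pos]]) simp
    then show ?thesis unfolding h cpow_qpowi .
  qed
  have "integral\<^sup>L M (\<lambda>x. Omega absK l x * complex_of_real (normK absK x) powr z) =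
      complex_of_real ((q powi (- l)) ^ CARD('n)) * integral\<^sup>L M (\<lambda>y. Omega absK 0 y * complex_of_real (normK absK (e *s y)) powr z)"
    by (rule scale_Omega[OF _ e]) measurable
  also have "\<dots> = exp (of_int (- l * int CARD('n)) * complex_of_real Lq) *
      (exp (z * of_int (- l) * complex_of_real Lq) * integral\<^sup>L M (\<lambda>y. Omega absK 0 y * complex_of_real (normK absK y) powr z))"
  proof -
    have a: "complex_of_real ((q powi (- l)) ^ CARD('n)) = exp (of_int (- l * int CARD('n)) * complex_of_real Lq)"
      unfolding power_int_power' by (rule cq_powi)
    have b: "(\<lambda>y. Omega absK 0 y * (exp (z * of_int (- l) * complex_of_real Lq) * complex_of_real (normK absK y) powr z))
       = (\<lambda>y. exp (z * of_int (- l) * complex_of_real Lq) * (Omega absK 0 y * complex_of_real (normK absK y) powr z))"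
      by (rule ext) (rule mult.left_commute)
    show ?thesis unfolding Pe a b by simp
  qed
  also have "\<dots> = exp (of_int (- l * int CARD('n)) * complex_of_real Lq + z * of_int (- l) * complex_of_real Lq) *
    integral\<^sup>L M (\<lambda>x. Omega absK 0 x * complex_of_real (normK absK x) powr z)"
    by (simp only: exp_add mult.assoc)
  also have "of_int (- l * int CARD('n)) * complex_of_real Lq + z * of_int (- l) * complex_of_real Lq
     = - of_int l * (z + of_nat CARD('n)) * complex_of_real Lq"
    by (simp add: algebra_simps)
  finally show ?thesis .
qed

end

context padic_haar begin

lemma cpow_one_left: "complex_of_real 1 powr z = 1"
  by (simp add: powr_def)

lemma J0_rel:
  assumes z: "0 \<le> Re z"
  shows "(1 - exp (- (z + of_nat CARD('n)) * complex_of_real Lq)) *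
     integral\<^sup>L M (\<lambda>x. Omega absK 0 x * complex_of_real (normK absK x) powr z) =
     1 - exp (- of_nat CARD('n) * complex_of_real Lq)"
proof -
  define J0 where "J0 = integral\<^sup>L M (\<lambda>x. Omega absK 0 x * complex_of_real (normK absK x) powr z)"
  have pw: "Omega absK 0 x * complex_of_real (normK absK x) powr z =
      (Omega absK 0 x - Omega absK 1 x) + Omega absK 1 x * complex_of_real (normK absK x) powr z" for x :: "'k ^ 'n"
  proof -
    have q1: "q powi (-1) \<le> 1" using q_gt1 by (simp add: power_int_minus inverse_le_1_iff)
    consider (a) "normK absK x \<le> q powi (-1)" | (b) "q powi (-1) < normK absK x" "normK absK x \<le> 1"
      | (c) "1 < normK absK x" by linarith
    then show ?thesis
    proof cases
      case a then show ?thesis using q1 unfolding Omega_def by simp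
    next
      case b
      then have "normK absK x = 1" by (rule normK_one)
      then show ?thesis using b unfolding Omega_def by (simp add: cpow_one_left)
    next
      case c then show ?thesis using q1 unfolding Omega_def by simp
    qed
  qed
  have "J0 = integral\<^sup>L M (\<lambda>x. (Omega absK 0 x - Omega absK 1 x) + Omega absK 1 x * complex_of_real (normK absK x) powr z)"
    unfolding J0_def using pw by simp
  also have "\<dots> = (integral\<^sup>L M (Omega absK 0) - integral\<^sup>L M (Omega absK 1)) +
        integral\<^sup>L M (\<lambda>x. Omega absK 1 x * complex_of_real (normK absK x) powr z)"
    using integrable_O integrable_OP[OF z] by simp
  also have "integral\<^sup>L M (Omega absK 0) - integral\<^sup>L M (Omega absK 1) = 1 - exp (- of_nat CARD('n) * complex_of_real Lq)"
  proof -
    have e1: "(q ^ CARD('n)) powi (- 1) = q powi (- int CARD('n))" unfolding power_int_power by simp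
    have "complex_of_real ((q ^ CARD('n)) powi (- 1)) = exp (of_int (- int CARD('n)) * complex_of_real Lq)"
      unfolding e1 by (rule cq_powi)
    also have "of_int (- int CARD('n)) * complex_of_real Lq = - of_nat CARD('n) * complex_of_real Lq" by simp
    finally have e2: "complex_of_real ((q ^ CARD('n)) powi (- 1)) = exp (- of_nat CARD('n) * complex_of_real Lq)" .
    show ?thesis unfolding int_Omega e2 by simp
  qed
  also have "integral\<^sup>L M (\<lambda>x. Omega absK 1 x * complex_of_real (normK absK x) powr z) =
      exp (- (z + of_nat CARD('n)) * complex_of_real Lq) * J0"
    unfolding J0_def using J_scale[of 1 z] by simp
  finally have "J0 = 1 - exp (- of_nat CARD('n) * complex_of_real Lq) + exp (- (z + of_nat CARD('n)) * complex_of_real Lq) * J0" .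
  then show ?thesis unfolding J0_def[symmetric] by (simp add: algebra_simps)
qed

lemma set_le1[measurable]: "{x. normK absK x \<le> 1} \<in> sets M"
proof -
  have "{x::'k^'n. normK absK x \<le> 1} = kball 0 1" unfolding kball_def by simp
  then show ?thesis by simp
qed

lemma set_gt1[measurable]: "{x. 1 < normK absK x} \<in> sets M"
proof -
  have "{x::'k^'n. 1 < normK absK x} = UNIV - {x. normK absK x \<le> 1}" by auto
  then show ?thesis using set_le1 by (metis sets.compl_sets space_M)
qed

lemma I23:
  assumes z: "0 \<le> Re z"
  shows "(LINT x : {x. normK absK x \<le> 1} | M. (Omega absK l x - Omega absK l (0::'k^'n)) * complex_of_real (normK absK x) powr z)
       + (LINT x : {x. normK absK x > 1} | M. Omega absK l x * complex_of_real (normK absK x) powr z)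
     = integral\<^sup>L M (\<lambda>x. Omega absK l x * complex_of_real (normK absK x) powr z)
       - integral\<^sup>L M (\<lambda>x. Omega absK 0 x * complex_of_real (normK absK x) powr z)"
proof -
  let ?P = "\<lambda>x. complex_of_real (normK absK x) powr z"
  have i1: "integrable M (\<lambda>x. indicator {x. normK absK x \<le> 1} x *\<^sub>R ((Omega absK l x - Omega absK l (0::'k^'n)) * ?P x))"
  proof (rule integrable_supp[where R = 1 and Bd = 2])
    show "(\<lambda>x. indicator {x. normK absK x \<le> 1} x *\<^sub>R ((Omega absK l x - Omega absK l (0::'k^'n)) * ?P x)) \<in> borel_measurable M"
      by measurable
    fix x :: "'k ^ 'n"
    show "1 < normK absK x \<Longrightarrow> indicator {x. normK absK x \<le> 1} x *\<^sub>R ((Omega absK l x - Omega absK l (0::'k^'n)) * ?P x) = 0"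
      by simp
    assume x: "normK absK x \<le> 1"
    have "norm (Omega absK l x - Omega absK l (0::'k^'n)) \<le> 2"
      using norm_triangle_ineq4[of "Omega absK l x" "Omega absK l (0::'k^'n)"] Omega_norm[of l x] Omega_norm[of l "0::'k^'n"] by linarith
    moreover have "norm (?P x) \<le> 1 powr Re z" using x z by (intro cpow_bound) auto
    ultimately have "norm ((Omega absK l x - Omega absK l (0::'k^'n)) * ?P x) \<le> 2 * 1"
      unfolding norm_mult by (intro mult_mono) auto
    then show "norm (indicator {x. normK absK x \<le> 1} x *\<^sub>R ((Omega absK l x - Omega absK l (0::'k^'n)) * ?P x)) \<le> 2"
      using x by simp
  qed
  have i2: "integrable M (\<lambda>x. indicator {x. normK absK x > 1} x *\<^sub>R (Omega absK l x * ?P x))"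
  proof (rule integrable_supp[where R = "q powi (- l)" and Bd = "(q powi (- l)) powr Re z"])
    show "(\<lambda>x. indicator {x. normK absK x > 1} x *\<^sub>R (Omega absK l x * ?P x)) \<in> borel_measurable M"
      by measurable
    fix x :: "'k ^ 'n"
    show "q powi (- l) < normK absK x \<Longrightarrow> indicator {x. normK absK x > 1} x *\<^sub>R (Omega absK l x * ?P x) = 0"
      by (simp add: Omega_supp)
    assume x: "normK absK x \<le> q powi (- l)"
    have "norm (Omega absK l x * ?P x) \<le> 1 * (q powi (- l)) powr Re z"
      unfolding norm_mult using Omega_norm x z by (intro mult_mono cpow_bound) auto
    then show "norm (indicator {x. normK absK x > 1} x *\<^sub>R (Omega absK l x * ?P x)) \<le> (q powi (- l)) powr Re z"
      by (simp add: indicator_def)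
  qed
  have pw: "indicator {x. normK absK x \<le> 1} x *\<^sub>R ((Omega absK l x - Omega absK l (0::'k^'n)) * ?P x)
      + indicator {x. normK absK x > 1} x *\<^sub>R (Omega absK l x * ?P x)
      = Omega absK l x * ?P x - Omega absK 0 x * ?P x" for x
    by (cases "normK absK x \<le> 1") (auto simp: indicator_def Omega_def algebra_simps)
  have "(LINT x : {x. normK absK x \<le> 1} | M. (Omega absK l x - Omega absK l (0::'k^'n)) * ?P x)
       + (LINT x : {x. normK absK x > 1} | M. Omega absK l x * ?P x)
     = integral\<^sup>L M (\<lambda>x. indicator {x. normK absK x \<le> 1} x *\<^sub>R ((Omega absK l x - Omega absK l (0::'k^'n)) * ?P x)
      + indicator {x. normK absK x > 1} x *\<^sub>R (Omega absK l x * ?P x))"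
    unfolding set_lebesgue_integral_def using i1 i2 by (rule Bochner_Integration.integral_add[symmetric])
  also have "\<dots> = integral\<^sup>L M (\<lambda>x. Omega absK l x * ?P x - Omega absK 0 x * ?P x)"
    unfolding pw ..
  also have "\<dots> = integral\<^sup>L M (\<lambda>x. Omega absK l x * ?P x) - integral\<^sup>L M (\<lambda>x. Omega absK 0 x * ?P x)"
    using integrable_OP[OF z, of l] integrable_OP[OF z, of 0] by (rule Bochner_Integration.integral_diff)
  finally show ?thesis .
qed

lemma riesz_Omega:
  assumes z: "0 \<le> Re (\<alpha> - of_nat CARD('n))"
  shows "riesz absK M \<alpha> (Omega absK l) = exp (- of_int l * \<alpha> * complex_of_real Lq) *
     (1 - qpow absK (- of_nat CARD('n))) / (1 - qpow absK (\<alpha> - of_nat CARD('n)))"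
proof -
  define z where "z = \<alpha> - of_nat CARD('n)"
  have za: "z + of_nat CARD('n) = \<alpha>" unfolding z_def by simp
  define J where "J l = integral\<^sup>L M (\<lambda>x. Omega absK l x * complex_of_real (normK absK x) powr z)" for l
  have Jl: "J l = exp (- of_int l * \<alpha> * complex_of_real Lq) * J 0"
    unfolding J_def using J_scale[of l z] unfolding za .
  have J0: "(1 - exp (- \<alpha> * complex_of_real Lq)) * J 0 = 1 - exp (- of_nat CARD('n) * complex_of_real Lq)"
    unfolding J_def using J0_rel[of z] z unfolding za z_def by simp
  have I: "(LINT x : {x. normK absK x \<le> 1} | M. (Omega absK l x - Omega absK l (0::'k^'n)) * complex_of_real (normK absK x) powr z)
       + (LINT x : {x. normK absK x > 1} | M. Omega absK l x * complex_of_real (normK absK x) powr z) = J l - J 0"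
    unfolding J_def using I23 z unfolding z_def by blast
  obtain A :: complex where A_def: "A = 1 - qpow absK (- of_nat CARD('n))" by blast
  obtain B :: complex where B_def: "B = 1 - qpow absK (- \<alpha>)" by blast
  obtain W :: complex where W_def: "W = 1 - qpow absK z" by blast
  obtain E :: complex where E_def: "E = exp (- of_int l * \<alpha> * complex_of_real Lq)" by blast
  have BJ: "B * J 0 = A" unfolding A_def B_def using J0 by (simp add: qpow_exp)
  have "riesz absK M \<alpha> (Omega absK l) = A / W + B / W *
      (LINT x : {x. normK absK x \<le> 1} | M. (Omega absK l x - Omega absK l (0::'k^'n)) * complex_of_real (normK absK x) powr z)
     + B / W * (LINT x : {x. normK absK x > 1} | M. Omega absK l x * complex_of_real (normK absK x) powr z)"
    unfolding riesz_def Let_def A_def B_def W_def z_def by simp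
  also have "\<dots> = (A + B * (J l - J 0)) / W" unfolding I[symmetric] by (simp add: divide_inverse algebra_simps)
  also have "A + B * (J l - J 0) = E * A" unfolding Jl E_def[symmetric] using BJ by (simp add: algebra_simps)
  finally show ?thesis unfolding E_def A_def W_def z_def by simp
qed

end

lemma lin_alg:
  fixes cc a i2 i3 :: "int \<Rightarrow> complex" and X Y Bc :: complex
  shows "(\<Sum>l\<in>L. cc l * a l) * X / Y + Bc * (\<Sum>l\<in>L. cc l * i2 l) + Bc * (\<Sum>l\<in>L. cc l * i3 l) =
    (\<Sum>l\<in>L. cc l * (a l * X / Y + Bc * i2 l + Bc * i3 l))"
proof -
  have 1: "(\<Sum>l\<in>L. cc l * a l) * X / Y = (\<Sum>l\<in>L. cc l * (a l * X / Y))"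
    by (simp add: sum_distrib_right sum_divide_distrib mult.assoc)
  have 2: "Bc * (\<Sum>l\<in>L. cc l * i2 l) = (\<Sum>l\<in>L. cc l * (Bc * i2 l))"
    by (simp add: sum_distrib_left mult.left_commute)
  have 3: "Bc * (\<Sum>l\<in>L. cc l * i3 l) = (\<Sum>l\<in>L. cc l * (Bc * i3 l))"
    by (simp add: sum_distrib_left mult.left_commute)
  show ?thesis unfolding 1 2 3 sum.distrib[symmetric] distrib_left ..
qed

context padic_haar begin

lemma int_I2:
  assumes z: "0 \<le> Re z"
  shows "integrable M (\<lambda>x. indicator {x. normK absK x \<le> 1} x *\<^sub>R ((Omega absK l x - Omega absK l (0::'k^'n)) * complex_of_real (normK absK x) powr z))"
proof (rule integrable_supp[where R = 1 and Bd = 2])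
  let ?P = "\<lambda>x. complex_of_real (normK absK x) powr z"
  show "(\<lambda>x. indicator {x. normK absK x \<le> 1} x *\<^sub>R ((Omega absK l x - Omega absK l (0::'k^'n)) * ?P x)) \<in> borel_measurable M"
    by measurable
  fix x :: "'k ^ 'n"
  show "1 < normK absK x \<Longrightarrow> indicator {x. normK absK x \<le> 1} x *\<^sub>R ((Omega absK l x - Omega absK l (0::'k^'n)) * ?P x) = 0"
    by simp
  assume x: "normK absK x \<le> 1"
  have "norm (Omega absK l x - Omega absK l (0::'k^'n)) \<le> 2"
    using norm_triangle_ineq4[of "Omega absK l x" "Omega absK l (0::'k^'n)"] Omega_norm[of l x] Omega_norm[of l "0::'k^'n"] by linarith
  moreover have "norm (?P x) \<le> 1 powr Re z" using x z by (intro cpow_bound) auto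
  ultimately have "norm ((Omega absK l x - Omega absK l (0::'k^'n)) * ?P x) \<le> 2 * 1"
    unfolding norm_mult by (intro mult_mono) auto
  then show "norm (indicator {x. normK absK x \<le> 1} x *\<^sub>R ((Omega absK l x - Omega absK l (0::'k^'n)) * ?P x)) \<le> 2"
    using x by simp
qed

lemma int_I3:
  assumes z: "0 \<le> Re z"
  shows "integrable M (\<lambda>x. indicator {x. normK absK x > 1} x *\<^sub>R (Omega absK l x * complex_of_real (normK absK x) powr z))"
proof (rule integrable_supp[where R = "q powi (- l)" and Bd = "(q powi (- l)) powr Re z"])
  let ?P = "\<lambda>x. complex_of_real (normK absK x) powr z"
  show "(\<lambda>x. indicator {x. normK absK x > 1} x *\<^sub>R (Omega absK l x * ?P x)) \<in> borel_measurable M"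
    by measurable
  fix x :: "'k ^ 'n"
  show "q powi (- l) < normK absK x \<Longrightarrow> indicator {x. normK absK x > 1} x *\<^sub>R (Omega absK l x * ?P x) = 0"
    by (simp add: Omega_supp)
  assume x: "normK absK x \<le> q powi (- l)"
  have "norm (Omega absK l x * ?P x) \<le> 1 * (q powi (- l)) powr Re z"
    unfolding norm_mult using Omega_norm x z by (intro mult_mono cpow_bound) auto
  then show "norm (indicator {x. normK absK x > 1} x *\<^sub>R (Omega absK l x * ?P x)) \<le> (q powi (- l)) powr Re z"
    by (simp add: indicator_def)
qed

lemma riesz_lin:
  assumes L: "finite L" and z: "0 \<le> Re (\<alpha> - of_nat CARD('n))"
  shows "riesz absK M \<alpha> (\<lambda>x. \<Sum>l\<in>L. cc l * Omega absK l x) = (\<Sum>l\<in>L. cc l * riesz absK M \<alpha> (Omega absK l))"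
proof -
  let ?z = "\<alpha> - of_nat CARD('n)"
  let ?P = "\<lambda>x. complex_of_real (normK absK x) powr ?z"
  let ?\<Phi> = "\<lambda>x::'k^'n. \<Sum>l\<in>L. cc l * Omega absK l x"
  have I2: "(LINT x : {x. normK absK x \<le> 1} | M. (?\<Phi> x - ?\<Phi> 0) * ?P x) =
      (\<Sum>l\<in>L. cc l * (LINT x : {x. normK absK x \<le> 1} | M. (Omega absK l x - Omega absK l (0::'k^'n)) * ?P x))"
  proof -
    have pw: "indicator {x. normK absK x \<le> 1} x *\<^sub>R ((?\<Phi> x - ?\<Phi> 0) * ?P x) =
        (\<Sum>l\<in>L. cc l * (indicator {x. normK absK x \<le> 1} x *\<^sub>R ((Omega absK l x - Omega absK l (0::'k^'n)) * ?P x)))" for x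
      by (simp add: sum_subtractf[symmetric] right_diff_distrib sum_distrib_left sum_distrib_right scaleR_conv_of_real algebra_simps)
    show ?thesis unfolding set_lebesgue_integral_def pw
    proof (subst Bochner_Integration.integral_sum)
      fix l assume "l \<in> L"
      show "integrable M (\<lambda>x. cc l * (indicator {x. normK absK x \<le> 1} x *\<^sub>R ((Omega absK l x - Omega absK l (0::'k^'n)) * ?P x)))"
        by (rule integrable_mult_right) (rule int_I2[OF z])
    qed (rule sum.cong[OF refl], rule integral_mult_right_zero)
  qed
  have I3: "(LINT x : {x. normK absK x > 1} | M. ?\<Phi> x * ?P x) =
      (\<Sum>l\<in>L. cc l * (LINT x : {x. normK absK x > 1} | M. Omega absK l x * ?P x))"
  proof -
    have pw: "indicator {x. normK absK x > 1} x *\<^sub>R (?\<Phi> x * ?P x) =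
        (\<Sum>l\<in>L. cc l * (indicator {x. normK absK x > 1} x *\<^sub>R (Omega absK l x * ?P x)))" for x
      by (simp add: sum_distrib_left sum_distrib_right scaleR_conv_of_real algebra_simps)
    show ?thesis unfolding set_lebesgue_integral_def pw
    proof (subst Bochner_Integration.integral_sum)
      fix l assume "l \<in> L"
      show "integrable M (\<lambda>x. cc l * (indicator {x. normK absK x > 1} x *\<^sub>R (Omega absK l x * ?P x)))"
        by (rule integrable_mult_right) (rule int_I3[OF z])
    qed (rule sum.cong[OF refl], rule integral_mult_right_zero)
  qed
  show ?thesis unfolding riesz_def Let_def I2 I3 by (rule lin_alg)
qed

end

context padic_haar begin

lemma Lq_pos: "0 < Lq" using q_gt1 by simp

lemma U_ne: "1 - qpow absK (- of_nat CARD('n)) \<noteq> 0"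
proof
  assume "1 - qpow absK (- of_nat CARD('n)) = 0"
  then have "norm (qpow absK (- of_nat CARD('n))) = 1" by simp
  moreover have "norm (qpow absK (- of_nat CARD('n))) = exp (- real CARD('n) * Lq)"
    unfolding qpow_exp norm_exp_eq_Re by simp
  moreover have "exp (- real CARD('n) * Lq) < 1" using Lq_pos by simp
  ultimately show False by simp
qed

lemma W_ne: "1 \<le> d \<Longrightarrow> 0 < Re s \<Longrightarrow> 1 - qpow absK (of_nat d * s) \<noteq> 0"
proof
  assume d: "1 \<le> d" and s: "0 < Re s" and "1 - qpow absK (of_nat d * s) = 0"
  then have "norm (qpow absK (of_nat d * s)) = 1" by simp
  moreover have "norm (qpow absK (of_nat d * s)) = exp (real d * Re s * Lq)"
    unfolding qpow_exp norm_exp_eq_Re by simp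
  moreover have "0 < real d * Re s * Lq" using Lq_pos d s by simp
  then have "1 < exp (real d * Re s * Lq)" by simp
  ultimately show False by linarith
qed

lemma main:
  fixes c :: "('n \<Rightarrow> nat) \<Rightarrow> 'k" and \<Phi> :: "'k ^ 'n \<Rightarrow> complex"
  assumes hom: "hom_form d c" and s: "0 < Re s" and Phi: "\<Phi> \<in> Delta_space absK"
  shows "igusa_pairing absK M (form_eval c) s \<Phi> =
         ((1 - qpow absK (of_nat d * s)) / (1 - qpow absK (- of_nat CARD('n))))
         * igusa_zeta absK M (form_eval c) s
         * riesz absK M (of_nat d * s + of_nat CARD('n)) \<Phi>"
proof -
  have fin: "finite {a. c a \<noteq> 0}" and d1: "1 \<le> d" using hom unfolding hom_form_def by auto
  obtain L cc where L: "finite L" and Phi_eq: "\<Phi> = (\<lambda>x. \<Sum>l\<in>L. cc l * Omega absK l x)"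
    using Phi unfolding Delta_space_def by blast
  let ?F = "\<lambda>x. complex_of_real (absK (form_eval c x)) powr s"
  let ?\<alpha> = "of_nat d * s + of_nat CARD('n) :: complex"
  let ?E = "\<lambda>l. exp (- of_int l * ?\<alpha> * complex_of_real Lq)"
  define Z where "Z = integral\<^sup>L M (\<lambda>x. Omega absK 0 x * ?F x)"
  have Zeq: "igusa_zeta absK M (form_eval c) s = Z"
    unfolding igusa_zeta_def set_lebesgue_integral_def Z_def
    by (rule Bochner_Integration.integral_cong) (auto simp: Omega_def indicator_def)
  have LHS: "igusa_pairing absK M (form_eval c) s \<Phi> = (\<Sum>l\<in>L. cc l * (?E l * Z))"
  proof -
    have pw: "indicator {x. form_eval c x \<noteq> 0} x *\<^sub>R (\<Phi> x * ?F x) = (\<Sum>l\<in>L. cc l * (Omega absK l x * ?F x))" for x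
      unfolding Phi_eq by (cases "form_eval c x = 0") (auto simp: sum_distrib_right mult.assoc)
    have "igusa_pairing absK M (form_eval c) s \<Phi> = integral\<^sup>L M (\<lambda>x. \<Sum>l\<in>L. cc l * (Omega absK l x * ?F x))"
      unfolding igusa_pairing_def set_lebesgue_integral_def pw ..
    also have "\<dots> = (\<Sum>l\<in>L. cc l * integral\<^sup>L M (\<lambda>x. Omega absK l x * ?F x))"
    proof (subst Bochner_Integration.integral_sum)
      fix l assume "l \<in> L"
      show "integrable M (\<lambda>x. cc l * (Omega absK l x * ?F x))"
        by (rule integrable_mult_right) (rule integrable_OF[OF fin], use s in simp)
    qed (rule sum.cong[OF refl], rule integral_mult_right_zero)
    also have "\<dots> = (\<Sum>l\<in>L. cc l * (?E l * Z))"
      unfolding Z_def by (rule sum.cong[OF refl]) (subst LHS_l[OF hom], rule refl)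
    finally show ?thesis .
  qed
  have za: "0 \<le> Re (?\<alpha> - of_nat CARD('n))" using s by simp
  have am: "?\<alpha> - of_nat CARD('n) = of_nat d * s" by simp
  define U' where "U' = 1 - qpow absK (- of_nat CARD('n))"
  define W' where "W' = 1 - qpow absK (of_nat d * s)"
  have R: "riesz absK M ?\<alpha> \<Phi> = (\<Sum>l\<in>L. cc l * (?E l * U' / W'))"
    unfolding Phi_eq riesz_lin[OF L za] riesz_Omega[OF za] am U'_def W'_def ..
  have Une: "U' \<noteq> 0" unfolding U'_def by (rule U_ne)
  have Wne: "W' \<noteq> 0" unfolding W'_def by (rule W_ne[OF d1 s])
  have S1: "(\<Sum>l\<in>L. cc l * (?E l * U' / W')) = U' / W' * (\<Sum>l\<in>L. cc l * ?E l)"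
    by (simp add: sum_distrib_left mult.commute mult.left_commute)
  have S2: "(\<Sum>l\<in>L. cc l * (?E l * Z)) = Z * (\<Sum>l\<in>L. cc l * ?E l)"
    by (simp add: sum_distrib_left mult.commute mult.left_commute)
  have fin_eq: "Z * S = W' / U' * Z * (U' / W' * S)" for S using Une Wne by (simp add: field_simps)
  show ?thesis unfolding LHS Zeq R S1 S2 U'_def[symmetric] W'_def[symmetric] by (rule fin_eq)
qed

end

theorem lemma2p3:
  fixes absK :: "'k::field_char_0 \<Rightarrow> real"
    and M :: "('k ^ 'n::finite) measure"
    and c :: "('n \<Rightarrow> nat) \<Rightarrow> 'k"
    and d :: nat
    and s :: complex
    and \<Phi> :: "'k ^ 'n \<Rightarrow> complex"
  assumes "p_adic_field absK"
    and "haar_measure absK M"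
    and "hom_form d c"
    and "0 < Re s"
    and "\<Phi> \<in> Delta_space absK"
  shows "igusa_pairing absK M (form_eval c) s \<Phi> =
         ((1 - qpow absK (of_nat d * s)) / (1 - qpow absK (- of_nat CARD('n))))
         * igusa_zeta absK M (form_eval c) s
         * riesz absK M (of_nat d * s + of_nat CARD('n)) \<Phi>"
proof -
  interpret padic_haar absK M
    by unfold_locales (rule assms(1), rule assms(2))
  show ?thesis by (rule main[OF assms(3-5)])
qed

end
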